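(* In the setting described in the context, there exists $\overline\alpha>0$ such that for every $\alpha\in[0,\overline\alpha]$, the function $z_{1,\alpha}$ is nonnegative on $(0,R)$.
   Context: Let $n=2$, $\Omega=\mathbb B(0,R)$, $0<m_0<\kappa$, $r_0^*\in(0,R)$ with $\kappa|\mathbb B(0,r_0^* )|=m_0|\Omega|$, $m_0^*=\kappa\mathds 1_{\mathbb B(0,r_0^* )}$ and $\sigma_\alpha=1+\alpha m_0^*$. Let $\lambda_{0,\alpha}$ be the principal Dirichlet eigenvalue of $u\mapsto-\nabla\cdot(\sigma_\alpha\nabla u)-m_0^*u$ on $\Omega$ and $u_{0,\alpha}$ the nonnegative $L^2$-normalized eigenfunction, which is radial; we write $u_{0,\alpha}(r)$ for its profile. For $f$ defined near $r_0^*$, $f|_{int}(r_0^* )$, $f|_{ext}(r_0^* )$ denote the one-sided limits from $r<r_0^*$ and $r>r_0^*$, and $[\![f]\!]=f|_{ext}-f|_{int}$. For $k\ge1$, $z_{k,\alpha}:[0,R]\to\mathbb{R}$ is the solution of $-\sigma_\alpha z''-\frac{\sigma_\alpha}{r}z'=(\lambda_{0,\alpha}-\frac{k^2}{r^2})z+m_0^*z$ on $(0,r_0^* )\cup(r_0^*,R)$, with $[\![\sigma_\alpha z']\!](r_0^* )=-\kappa u_{0,\alpha}(r_0^* )$, $[\![z]\!](r_0^* )=-[\![\partial_ru_{0,\alpha}]\!](r_0^* )$, $z(0)=0$, $z(R)=0$. *)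

theory Defs
  imports "HOL-Analysis.Analysis"
begin

text \<open>Radial setting in dimension 2: Omega = B(0,R), m0* = kappa * indicator of B(0,r0),
  sigma_alpha = 1 + alpha * m0*.  All functions below are radial profiles on [0,R].\<close>

definition mstar :: "real \<Rightarrow> real \<Rightarrow> real \<Rightarrow> real" where
  "mstar \<kappa> r0 r = (if r < r0 then \<kappa> else 0)"

definition sigma :: "real \<Rightarrow> real \<Rightarrow> real \<Rightarrow> real \<Rightarrow> real" where
  "sigma \<kappa> r0 \<alpha> r = 1 + \<alpha> * mstar \<kappa> r0 r"

definition solves_radial_ode ::
  "real \<Rightarrow> real \<Rightarrow> real \<Rightarrow> real \<Rightarrow> real \<Rightarrow> nat \<Rightarrow> (real \<Rightarrow> real) \<Rightarrow> (real \<Rightarrow> real) \<Rightarrow> bool" where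
  "solves_radial_ode \<kappa> r0 \<alpha> R lam k f f' \<longleftrightarrow>
     (\<forall>r \<in> {0<..<r0} \<union> {r0<..<R}.
        (f has_real_derivative f' r) (at r) \<and>
        (\<exists>f''. (f' has_real_derivative f'') (at r) \<and>
           - sigma \<kappa> r0 \<alpha> r * f'' - sigma \<kappa> r0 \<alpha> r / r * f' r
             = (lam - real k ^ 2 / r ^ 2) * f r + mstar \<kappa> r0 r * f r))"

text \<open>Radial Dirichlet eigenfunction of u \<mapsto> -div(sigma grad u) - m0* u on B(0,R):
  profile continuous on [0,R] (regular at the origin), classical solution on each phase,
  transmission conditions (continuity of u and of sigma u') at r0, u(R) = 0, nontrivial.\<close>
definition radial_eigenfunction ::
  "real \<Rightarrow> real \<Rightarrow> real \<Rightarrow> real \<Rightarrow> real \<Rightarrow> (real \<Rightarrow> real) \<Rightarrow> bool" where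
  "radial_eigenfunction \<kappa> r0 \<alpha> R lam u \<longleftrightarrow>
     continuous_on {0..R} u \<and>
     (\<exists>u' a b. solves_radial_ode \<kappa> r0 \<alpha> R lam 0 u u' \<and>
        (u' \<longlongrightarrow> a) (at_left r0) \<and> (u' \<longlongrightarrow> b) (at_right r0) \<and>
        b - (1 + \<alpha> * \<kappa>) * a = 0) \<and>
     u R = 0 \<and> (\<exists>r \<in> {0..R}. u r \<noteq> 0)"

definition principal_eigenpair ::
  "real \<Rightarrow> real \<Rightarrow> real \<Rightarrow> real \<Rightarrow> real \<Rightarrow> (real \<Rightarrow> real) \<Rightarrow> bool" where
  "principal_eigenpair \<kappa> r0 \<alpha> R lam u \<longleftrightarrow>
     radial_eigenfunction \<kappa> r0 \<alpha> R lam u \<and>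
     (\<forall>\<mu> v. radial_eigenfunction \<kappa> r0 \<alpha> R \<mu> v \<longrightarrow> lam \<le> \<mu>) \<and>
     (\<forall>r \<in> {0..R}. 0 \<le> u r) \<and>
     integral (ball (0::real^2) R) (\<lambda>x. (u (norm x))\<^sup>2) = 1"

text \<open>z = z_{k,alpha}: solves the radial ODE on (0,r0) and (r0,R), is continuous up to the
  boundary of each phase, with jump conditions
  [[sigma z']](r0) = - kappa u(r0),  [[z]](r0) = - [[u']](r0),  z(0) = 0, z(R) = 0,
  where [[f]] = f|ext - f|int (one-sided limits).\<close>
definition z_problem ::
  "real \<Rightarrow> real \<Rightarrow> real \<Rightarrow> real \<Rightarrow> real \<Rightarrow> (real \<Rightarrow> real) \<Rightarrow> nat \<Rightarrow> (real \<Rightarrow> real) \<Rightarrow> bool" where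
  "z_problem \<kappa> r0 \<alpha> R lam u k z \<longleftrightarrow>
     continuous_on {0..<r0} z \<and> continuous_on {r0<..R} z \<and>
     (\<exists>z' u' zi ze dzi dze dui due.
        solves_radial_ode \<kappa> r0 \<alpha> R lam k z z' \<and>
        (\<forall>r \<in> {0<..<r0} \<union> {r0<..<R}. (u has_real_derivative u' r) (at r)) \<and>
        (z \<longlongrightarrow> zi) (at_left r0) \<and> (z \<longlongrightarrow> ze) (at_right r0) \<and>
        (z' \<longlongrightarrow> dzi) (at_left r0) \<and> (z' \<longlongrightarrow> dze) (at_right r0) \<and>
        (u' \<longlongrightarrow> dui) (at_left r0) \<and> (u' \<longlongrightarrow> due) (at_right r0) \<and>
        1 * dze - (1 + \<alpha> * \<kappa>) * dzi = - \<kappa> * u r0 \<and>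
        ze - zi = - (due - dui)) \<and>
     z 0 = 0 \<and> z R = 0"

end

theory Submission
  imports Defs
begin
lemma nonincr_open:
  fixes f f' :: "real \<Rightarrow> real"
  assumes "\<And>x. lo < x \<Longrightarrow> x < hi \<Longrightarrow> (f has_real_derivative f' x) (at x)"
    and "\<And>x. lo < x \<Longrightarrow> x < hi \<Longrightarrow> f' x \<le> 0"
    and "lo < s" "s \<le> t" "t < hi"
  shows "f t \<le> f s"
proof (rule DERIV_nonpos_imp_nonincreasing[of s t f])
  fix x assume "s \<le> x" "x \<le> t"
  hence "lo < x" "x < hi" using assms by linarith+
  thus "\<exists>y. (f has_real_derivative y) (at x) \<and> y \<le> 0" using assms(1,2) by blast
qed (use assms in auto)

lemma nondecr_open:
  fixes f f' :: "real \<Rightarrow> real"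
  assumes "\<And>x. lo < x \<Longrightarrow> x < hi \<Longrightarrow> (f has_real_derivative f' x) (at x)"
    and "\<And>x. lo < x \<Longrightarrow> x < hi \<Longrightarrow> f' x \<ge> 0"
    and "lo < s" "s \<le> t" "t < hi"
  shows "f s \<le> f t"
proof (rule DERIV_nonneg_imp_nondecreasing[of s t f])
  fix x assume "s \<le> x" "x \<le> t"
  hence "lo < x" "x < hi" using assms by linarith+
  thus "\<exists>y. (f has_real_derivative y) (at x) \<and> y \<ge> 0" using assms(1,2) by blast
qed (use assms in auto)

lemma lim_right_ge:
  fixes f :: "real \<Rightarrow> real"
  assumes "lo < t" "(f \<longlongrightarrow> L) (at_right lo)" "\<And>s. lo < s \<Longrightarrow> s < t \<Longrightarrow> c \<le> f s"
  shows "c \<le> L"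
proof (rule tendsto_lowerbound[OF assms(2)])
  show "\<forall>\<^sub>F x in at_right lo. c \<le> f x"
    unfolding eventually_at_right_field using assms(1,3) by blast
qed simp

lemma lim_right_le:
  fixes f :: "real \<Rightarrow> real"
  assumes "lo < t" "(f \<longlongrightarrow> L) (at_right lo)" "\<And>s. lo < s \<Longrightarrow> s < t \<Longrightarrow> f s \<le> c"
  shows "L \<le> c"
proof (rule tendsto_upperbound[OF assms(2)])
  show "\<forall>\<^sub>F x in at_right lo. f x \<le> c"
    unfolding eventually_at_right_field using assms(1,3) by blast
qed simp

lemma lim_left_ge:
  fixes f :: "real \<Rightarrow> real"
  assumes "t < hi" "(f \<longlongrightarrow> L) (at_left hi)" "\<And>s. t < s \<Longrightarrow> s < hi \<Longrightarrow> c \<le> f s"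
  shows "c \<le> L"
proof (rule tendsto_lowerbound[OF assms(2)])
  show "\<forall>\<^sub>F x in at_left hi. c \<le> f x"
    unfolding eventually_at_left_field using assms(1,3) by blast
qed simp

lemma lim_left_le:
  fixes f :: "real \<Rightarrow> real"
  assumes "t < hi" "(f \<longlongrightarrow> L) (at_left hi)" "\<And>s. t < s \<Longrightarrow> s < hi \<Longrightarrow> f s \<le> c"
  shows "L \<le> c"
proof (rule tendsto_upperbound[OF assms(2)])
  show "\<forall>\<^sub>F x in at_left hi. f x \<le> c"
    unfolding eventually_at_left_field using assms(1,3) by blast
qed simp

lemma core_min:
  fixes f :: "real \<Rightarrow> real"
  assumes "a < s" "s < b" "continuous_on {a..b} f" "f s < f a" "f s < f b"
    and der: "\<And>x. a < x \<Longrightarrow> x < b \<Longrightarrow> \<exists>d. (f has_real_derivative d) (at x)"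
    and loc: "\<And>x. a < x \<Longrightarrow> x < b \<Longrightarrow> f x < 0 \<Longrightarrow> (f has_real_derivative 0) (at x) \<Longrightarrow>
               (\<exists>d>0. \<forall>h>0. h < d \<longrightarrow> x + h < b \<longrightarrow> f (x + h) < f x)"
    and "f s < 0"
  shows False
proof -
  have "compact {a..b}" by simp
  moreover have "{a..b} \<noteq> {}" using assms(1,2) by simp
  ultimately obtain m where m: "m \<in> {a..b}" "\<And>y. y \<in> {a..b} \<Longrightarrow> f m \<le> f y"
    using continuous_attains_inf[of "{a..b}" f] assms(3) by blast
  have sab: "s \<in> {a..b}" using assms(1,2) by simp
  have "f m \<le> f s" using m(2)[OF sab] .
  hence "m \<noteq> a" "m \<noteq> b" using assms(4,5) by auto
  hence mab: "a < m" "m < b" using m(1) by auto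
  obtain d where d: "(f has_real_derivative d) (at m)" using der[OF mab] by blast
  have "d = 0"
  proof (rule DERIV_local_min[OF d, of "min (m - a) (b - m)"])
    show "0 < min (m - a) (b - m)" using mab by simp
    show "\<forall>y. \<bar>m - y\<bar> < min (m - a) (b - m) \<longrightarrow> f m \<le> f y"
    proof (intro allI impI)
      fix y assume "\<bar>m - y\<bar> < min (m - a) (b - m)"
      hence "y \<in> {a..b}" by (auto simp: abs_less_iff)
      thus "f m \<le> f y" using m(2) by blast
    qed
  qed
  with d have d0: "(f has_real_derivative 0) (at m)" by simp
  have "f m < 0" using \<open>f m \<le> f s\<close> assms(8) by simp
  then obtain e where e: "e > 0" "\<forall>h>0. h < e \<longrightarrow> m + h < b \<longrightarrow> f (m + h) < f m"
    using loc[OF mab(1) mab(2) _ d0] by blast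
  define h where "h = min (e/2) ((b - m)/2)"
  have "h > 0" using e mab by (simp add: h_def)
  have "h \<le> e/2" "h \<le> (b - m)/2" unfolding h_def by (rule min.cobounded1, rule min.cobounded2)
  have "2 * h \<le> b - m" using \<open>h \<le> (b - m)/2\<close> by simp
  hence "m + h < b" using \<open>h > 0\<close> by simp
  have "h < e" using \<open>h \<le> e/2\<close> e by simp
  have "f (m + h) < f m" using e(2) \<open>h > 0\<close> \<open>h < e\<close> \<open>m + h < b\<close> by blast
  moreover have "m + h \<in> {a..b}" using \<open>h > 0\<close> \<open>m + h < b\<close> mab by auto
  ultimately show False using m(2)[of "m + h"] by linarith
qed

definition uph :: "real \<Rightarrow> real \<Rightarrow> real \<Rightarrow> real \<Rightarrow> (real \<Rightarrow> real) \<Rightarrow> (real \<Rightarrow> real) \<Rightarrow> bool" where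
  "uph lo hi s q u u1 \<longleftrightarrow> (\<forall>t. lo < t \<and> t < hi \<longrightarrow> (u has_real_derivative u1 t) (at t) \<and>
      ((\<lambda>r. s * r * u1 r) has_real_derivative (- (q * t * u t))) (at t))"

definition zph :: "real \<Rightarrow> real \<Rightarrow> real \<Rightarrow> real \<Rightarrow> (real \<Rightarrow> real) \<Rightarrow> (real \<Rightarrow> real) \<Rightarrow> bool" where
  "zph lo hi s q z z1 \<longleftrightarrow> (\<forall>t. lo < t \<and> t < hi \<longrightarrow> (z has_real_derivative z1 t) (at t) \<and>
      ((\<lambda>r. s * r * z1 r) has_real_derivative (z t / t - q * t * z t)) (at t))"

definition wr :: "real \<Rightarrow> (real \<Rightarrow> real) \<Rightarrow> (real \<Rightarrow> real) \<Rightarrow> (real \<Rightarrow> real) \<Rightarrow> (real \<Rightarrow> real) \<Rightarrow> real \<Rightarrow> real" where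
  "wr s u u1 z z1 r = u r * (s * r * z1 r) - z r * (s * r * u1 r)"

lemma ph_gen:
  assumes "solves_radial_ode \<kappa> r0 \<alpha> R lam k f f'" "t \<in> {0<..<r0} \<union> {r0<..<R}" "0 < r0"
  shows "(f has_real_derivative f' t) (at t) \<and>
    ((\<lambda>r. sigma \<kappa> r0 \<alpha> t * r * f' r) has_real_derivative
        (- ((lam + mstar \<kappa> r0 t) * t * f t) + real k ^ 2 * f t / t)) (at t)"
proof -
  from assms obtain f'' where d1: "(f has_real_derivative f' t) (at t)"
     and d2: "(f' has_real_derivative f'') (at t)"
     and eq: "- sigma \<kappa> r0 \<alpha> t * f'' - sigma \<kappa> r0 \<alpha> t / t * f' t
             = (lam - real k ^ 2 / t ^ 2) * f t + mstar \<kappa> r0 t * f t"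
    unfolding solves_radial_ode_def by blast
  have tpos: "t > 0" using assms(2,3) by auto
  define S where "S = sigma \<kappa> r0 \<alpha> t"
  have "((\<lambda>r. S * r * f' r) has_real_derivative (S * f' t + S * t * f'')) (at t)"
    using DERIV_mult[OF DERIV_cmult[OF DERIV_ident, of S] d2] by (simp add: algebra_simps)
  moreover have "S * f' t + S * t * f'' = - ((lam + mstar \<kappa> r0 t) * t * f t) + real k ^ 2 * f t / t"
  proof -
    have "t * (- S * f'' - S / t * f' t) = t * ((lam - real k ^ 2 / t ^ 2) * f t + mstar \<kappa> r0 t * f t)"
      using eq unfolding S_def by simp
    moreover have "t * (- S * f'' - S / t * f' t) = - (S * t * f'') - S * f' t"
      using tpos by (simp add: field_simps)
    moreover have "t * ((lam - real k ^ 2 / t ^ 2) * f t + mstar \<kappa> r0 t * f t)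
        = (lam + mstar \<kappa> r0 t) * t * f t - real k ^ 2 * f t / t"
      using tpos by (simp add: field_simps power2_eq_square)
    ultimately have "S * t * f'' = - S * f' t - ((lam + mstar \<kappa> r0 t) * t * f t) + real k ^ 2 * f t / t"
      by linarith
    thus ?thesis by simp
  qed
  ultimately show ?thesis using d1 unfolding S_def by simp
qed

lemma wr_deriv:
  assumes "uph lo hi s q u u1" "zph lo hi s q z z1" "lo < t" "t < hi"
  shows "(wr s u u1 z z1 has_real_derivative (u t * z t / t)) (at t)"
proof -
  from assms have du: "(u has_real_derivative u1 t) (at t)"
    and dU: "((\<lambda>r. s * r * u1 r) has_real_derivative (- (q * t * u t))) (at t)"
    and dz: "(z has_real_derivative z1 t) (at t)"
    and dZ: "((\<lambda>r. s * r * z1 r) has_real_derivative (z t / t - q * t * z t)) (at t)"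
    unfolding uph_def zph_def by auto
  have a1: "((\<lambda>r. u r * (s * r * z1 r)) has_real_derivative (u1 t * (s * t * z1 t) + (z t / t - q * t * z t) * u t)) (at t)"
    using DERIV_mult[OF du dZ] by simp
  have a2: "((\<lambda>r. z r * (s * r * u1 r)) has_real_derivative (z1 t * (s * t * u1 t) + (- (q * t * u t)) * z t)) (at t)"
    using DERIV_mult[OF dz dU] by simp
  have "((\<lambda>r. u r * (s * r * z1 r) - z r * (s * r * u1 r)) has_real_derivative
     (u1 t * (s * t * z1 t) + (z t / t - q * t * z t) * u t - (z1 t * (s * t * u1 t) + (- (q * t * u t)) * z t))) (at t)"
    using DERIV_diff[OF a1 a2] by simp
  moreover have "u1 t * (s * t * z1 t) + (z t / t - q * t * z t) * u t - (z1 t * (s * t * u1 t) + (- (q * t * u t)) * z t) = u t * z t / t"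
    by (simp add: algebra_simps)
  ultimately show ?thesis unfolding wr_def[abs_def] by simp
qed

lemma rho_deriv:
  assumes "uph lo hi s q u u1" "zph lo hi s q z z1" "lo < t" "t < hi" "0 \<le> lo" "s > 0" "u t \<noteq> 0"
  shows "((\<lambda>r. z r / u r) has_real_derivative (wr s u u1 z z1 t / (s * t * (u t)^2))) (at t)"
proof -
  from assms have du: "(u has_real_derivative u1 t) (at t)"
    and dz: "(z has_real_derivative z1 t) (at t)"
    unfolding uph_def zph_def by auto
  have "((\<lambda>r. z r / u r) has_real_derivative ((z1 t * u t - z t * u1 t) / (u t * u t))) (at t)"
    by (rule DERIV_divide[OF dz du assms(7)])
  moreover have "(z1 t * u t - z t * u1 t) / (u t * u t) = wr s u u1 z z1 t / (s * t * (u t)^2)"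
    using assms by (simp add: wr_def field_simps power2_eq_square)
  ultimately show ?thesis by simp
qed

lemma rho_local:
  assumes U: "uph lo hi s q u u1" and Z: "zph lo hi s q z z1" and "0 \<le> lo" "s > 0"
    and upos: "\<And>t. lo < t \<Longrightarrow> t < hi \<Longrightarrow> u t > 0"
    and x: "lo < x" "x < hi" and neg: "z x / u x < 0"
    and d0: "((\<lambda>r. z r / u r) has_real_derivative 0) (at x)"
  shows "\<exists>d>0. \<forall>h>0. h < d \<longrightarrow> x + h < hi \<longrightarrow> z (x + h) / u (x + h) < z x / u x"
proof -
  have ux: "u x > 0" using upos x by simp
  have xpos: "x > 0" using x assms(3) by simp
  have "wr s u u1 z z1 x / (s * x * (u x)^2) = 0"
    using DERIV_unique[OF rho_deriv[OF U Z x assms(3,4)] d0] ux by simp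
  hence w0: "wr s u u1 z z1 x = 0" using ux xpos assms(4) by simp
  have zx: "z x < 0" using neg ux by (simp add: divide_less_0_iff)
  have "u x * z x / x < 0" using ux zx xpos by (simp add: divide_neg_pos mult_pos_neg)
  then obtain d where d: "d > 0" "\<And>h. h > 0 \<Longrightarrow> h < d \<Longrightarrow> wr s u u1 z z1 (x + h) < wr s u u1 z z1 x"
    using has_real_derivative_neg_dec_right[OF wr_deriv[OF U Z x]] by auto
  show ?thesis
  proof (intro exI[of _ d] conjI allI impI)
    show "d > 0" by (rule d(1))
    fix h assume h: "h > 0" "h < d" "x + h < hi"
    show "z (x + h) / u (x + h) < z x / u x"
    proof (rule DERIV_neg_imp_decreasing_open[of x "x + h"])
      show "x < x + h" using h by simp
      fix y assume y: "x < y" "y < x + h"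
      have yl: "lo < y" "y < hi" using y x h by auto
      have "wr s u u1 z z1 y < 0" using d(2)[of "y - x"] y h w0 by simp
      moreover have "s * y * (u y)^2 > 0" using upos[OF yl] yl assms(3,4) by simp
      ultimately have "wr s u u1 z z1 y / (s * y * (u y)^2) < 0" by (simp add: divide_neg_pos)
      thus "\<exists>l. ((\<lambda>r. z r / u r) has_real_derivative l) (at y) \<and> l < 0"
        using rho_deriv[OF U Z yl assms(3,4)] upos[OF yl] by fastforce
    next
      show "continuous_on {x..x + h} (\<lambda>r. z r / u r)"
      proof (rule continuous_at_imp_continuous_on, intro ballI)
        fix y assume "y \<in> {x..x+h}"
        hence yl: "lo < y" "y < hi" using x h by auto
        show "isCont (\<lambda>r. z r / u r) y"
          using DERIV_isCont[OF rho_deriv[OF U Z yl assms(3,4)]] upos[OF yl] by simp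
      qed
    qed
  qed
qed

lemma lip:
  fixes f f' :: "real \<Rightarrow> real"
  assumes "a \<le> b" "\<And>x. a \<le> x \<Longrightarrow> x \<le> b \<Longrightarrow> (f has_real_derivative f' x) (at x)"
    "\<And>x. a \<le> x \<Longrightarrow> x \<le> b \<Longrightarrow> \<bar>f' x\<bar> \<le> M"
  shows "\<bar>f b - f a\<bar> \<le> M * (b - a)"
proof (cases "a = b")
  case True thus ?thesis by simp
next
  case False
  hence "a < b" using assms(1) by simp
  then obtain z where z: "a < z" "z < b" "f b - f a = (b - a) * f' z"
    using MVT2[of a b f f'] assms(2) by blast
  have "\<bar>f' z\<bar> \<le> M" using assms(3) z by simp
  hence "\<bar>(b - a) * f' z\<bar> \<le> (b - a) * M" using \<open>a < b\<close> by (simp add: abs_mult mult_left_mono)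
  thus ?thesis using z(3) by (simp add: mult.commute)
qed

lemma log_blowup:
  fixes f f' :: "real \<Rightarrow> real"
  assumes t: "t > 0" and cont: "continuous_on {0..t} f"
    and der: "\<And>x. 0 < x \<Longrightarrow> x < t \<Longrightarrow> (f has_real_derivative f' x) (at x)"
    and ge: "\<And>x. 0 < x \<Longrightarrow> x < t \<Longrightarrow> f' x \<ge> c / x" and c: "c > 0"
  shows False
proof -
  obtain m where m: "m \<in> {0..t}" "\<And>y. y \<in> {0..t} \<Longrightarrow> f m \<le> f y"
    using continuous_attains_inf[of "{0..t}" f] cont t by fastforce
  define A where "A = (f m - f t + c * ln t) / c"
  define e where "e = min (t/2) (exp (A - 1))"
  have epos: "e > 0" using t by (simp add: e_def)
  have et: "e < t" using t unfolding e_def by linarith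
  have eA: "e \<le> exp (A - 1)" unfolding e_def by simp
  have mono: "f e - c * ln e \<le> f t - c * ln t"
  proof (rule DERIV_nonneg_imp_increasing_open[of e t "\<lambda>x. f x - c * ln x"])
    show "e \<le> t" using et by simp
    fix x assume x: "e < x" "x < t"
    hence xp: "x > 0" using epos by simp
    have "((\<lambda>x. f x - c * ln x) has_real_derivative (f' x - c * (1 / x))) (at x)"
      by (intro DERIV_diff DERIV_cmult der DERIV_ln_divide xp x(2))
    moreover have "f' x - c * (1 / x) \<ge> 0" using ge[OF xp x(2)] by simp
    ultimately show "\<exists>y. ((\<lambda>x. f x - c * ln x) has_real_derivative y) (at x) \<and> 0 \<le> y" by blast
  next
    have "continuous_on {e..t} f" using continuous_on_subset[OF cont] epos by auto
    moreover have "continuous_on {e..t} (\<lambda>x. c * ln x)"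
      using epos by (intro continuous_intros) auto
    ultimately show "continuous_on {e..t} (\<lambda>x. f x - c * ln x)"
      by (intro continuous_on_diff)
  qed
  have "f m \<le> f e" using m(2)[of e] epos et by simp
  hence "f m - f t + c * ln t \<le> c * ln e" using mono by linarith
  hence "A \<le> ln e" unfolding A_def using c by (simp add: divide_le_eq mult.commute)
  moreover have "ln e \<le> A - 1" using eA epos by (metis ln_exp ln_le_cancel_iff exp_gt_zero)
  ultimately show False by linarith
qed

lemma halving_zero:
  fixes g :: "real \<Rightarrow> real"
  assumes "\<And>B. B \<ge> 0 \<Longrightarrow> (\<forall>x\<in>I. \<bar>g x\<bar> \<le> B) \<Longrightarrow> (\<forall>x\<in>I. \<bar>g x\<bar> \<le> B / 2)"
    and "B0 \<ge> 0" "\<forall>x\<in>I. \<bar>g x\<bar> \<le> B0" "y \<in> I"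
  shows "g y = 0"
proof -
  have all: "\<forall>x\<in>I. \<bar>g x\<bar> \<le> B0 / 2 ^ n" for n
  proof (induction n)
    case 0 thus ?case using assms(3) by simp
  next
    case (Suc n)
    have "\<forall>x\<in>I. \<bar>g x\<bar> \<le> (B0 / 2 ^ n) / 2"
      by (rule assms(1)) (use Suc assms(2) in auto)
    thus ?case by (simp add: field_simps)
  qed
  show ?thesis
  proof (rule ccontr)
    assume "g y \<noteq> 0"
    hence gp: "\<bar>g y\<bar> > 0" by simp
    obtain n where n: "B0 / \<bar>g y\<bar> < 2 ^ n"
      using real_arch_pow[of 2 "B0 / \<bar>g y\<bar>"] by auto
    hence "B0 / 2 ^ n < \<bar>g y\<bar>" using gp by (simp add: field_simps)
    thus False using all[of n] assms(4) by force
  qed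
qed

lemma aux_div_bound:
  fixes v q t B d s x :: real
  assumes "s * x * \<bar>v\<bar> \<le> \<bar>q\<bar> * t * B * d" "t \<le> 2 * x" "x > 0" "s > 0" "B \<ge> 0" "d \<ge> 0"
  shows "\<bar>v\<bar> \<le> 2 * \<bar>q\<bar> * B * d / s"
proof -
  have "\<bar>q\<bar> * t * B * d \<le> \<bar>q\<bar> * (2 * x) * B * d"
    using assms by (intro mult_right_mono mult_left_mono) auto
  hence "x * (s * \<bar>v\<bar>) \<le> x * (2 * \<bar>q\<bar> * B * d)" using assms(1) by (simp add: algebra_simps)
  hence "s * \<bar>v\<bar> \<le> 2 * \<bar>q\<bar> * B * d" using assms(3) by simp
  thus ?thesis using assms(4) by (simp add: field_simps)
qed

lemma local_zero:
  assumes U: "uph lo hi s q u u1" and lo: "0 \<le> lo" and s: "s > 0" and t: "lo < t" "t < hi"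
    and ut: "u t = 0" and u1t: "u1 t = 0"
  shows "\<exists>y. lo < y \<and> y < t \<and> u y = 0"
proof -
  define d where "d = min (min ((t - lo)/2) (t/2)) (min 1 (s / (4 * (\<bar>q\<bar> + 1))))"
  have tp: "t > 0" using lo t by simp
  have dpos: "d > 0" using t tp s by (simp add: d_def)
  have d1: "d \<le> (t - lo)/2" "d \<le> t/2" "d \<le> 1" "d \<le> s / (4 * (\<bar>q\<bar> + 1))"
    unfolding d_def by linarith+
  define I where "I = {t - d..t}"
  have inI: "lo < x" "x < hi" "t \<le> 2 * x" "x > 0" if "x \<in> I" for x
    using that d1 t tp unfolding I_def by auto
  have du: "(u has_real_derivative u1 x) (at x)" 
    and dF: "((\<lambda>r. s * r * u1 r) has_real_derivative (- (q * x * u x))) (at x)" if "x \<in> I" for x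
    using U inI[OF that] unfolding uph_def by auto
  have contI: "continuous_on I u"
    using du by (intro continuous_at_imp_continuous_on ballI DERIV_isCont) blast
  have cI: "compact I" "I \<noteq> {}" using dpos unfolding I_def by auto
  obtain xm where xm: "xm \<in> I" "\<And>y. y \<in> I \<Longrightarrow> \<bar>u y\<bar> \<le> \<bar>u xm\<bar>"
    using continuous_attains_sup[OF cI(1) cI(2) continuous_on_rabs[OF contI]] by blast
  have step: "\<forall>x\<in>I. \<bar>u x\<bar> \<le> B / 2" if B: "B \<ge> 0" "\<forall>x\<in>I. \<bar>u x\<bar> \<le> B" for B
  proof
    fix x assume x: "x \<in> I"
    have xt: "x \<le> t" "t - x \<le> d" using x unfolding I_def by auto
    have sub: "y \<in> I" if "x \<le> y" "y \<le> t" for y using that x unfolding I_def by auto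
    have "\<bar>s * t * u1 t - s * x * u1 x\<bar> \<le> (\<bar>q\<bar> * t * B) * (t - x)"
    proof (rule lip[OF xt(1)])
      fix y assume y: "x \<le> y" "y \<le> t"
      show "((\<lambda>r. s * r * u1 r) has_real_derivative (- (q * y * u y))) (at y)" using dF[OF sub[OF y]] .
      have "\<bar>u y\<bar> \<le> B" using B(2) sub[OF y] by blast
      moreover have "0 \<le> y" using inI[OF sub[OF y]] by simp
      ultimately have "\<bar>q\<bar> * y * \<bar>u y\<bar> \<le> \<bar>q\<bar> * t * B"
        using y B(1) by (intro mult_mono) (auto intro: mult_left_mono)
      thus "\<bar>- (q * y * u y)\<bar> \<le> \<bar>q\<bar> * t * B" using \<open>0 \<le> y\<close> by (simp add: abs_mult)
    qed
    also have "\<dots> \<le> (\<bar>q\<bar> * t * B) * d"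
      using xt B(1) tp by (intro mult_left_mono) auto
    finally have "s * x * \<bar>u1 x\<bar> \<le> \<bar>q\<bar> * t * B * d"
      using u1t inI[OF x] s by (simp add: abs_mult)
    have ok: "\<bar>u1 y\<bar> \<le> 2 * \<bar>q\<bar> * B * d / s" if y: "x \<le> y" "y \<le> t" for y
    proof -
      have yI: "y \<in> I" using sub[OF y] .
      have yt: "y \<le> t" "t - y \<le> d" using yI unfolding I_def by auto
      have "\<bar>s * t * u1 t - s * y * u1 y\<bar> \<le> (\<bar>q\<bar> * t * B) * (t - y)"
      proof (rule lip[OF yt(1)])
        fix w assume w: "y \<le> w" "w \<le> t"
        have wI: "w \<in> I" using w yI unfolding I_def by auto
        show "((\<lambda>r. s * r * u1 r) has_real_derivative (- (q * w * u w))) (at w)" using dF[OF wI] .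
        have "\<bar>u w\<bar> \<le> B" using B(2) wI by blast
        moreover have "0 \<le> w" using inI[OF wI] by simp
        ultimately have "\<bar>q\<bar> * w * \<bar>u w\<bar> \<le> \<bar>q\<bar> * t * B"
          using w B(1) by (intro mult_mono) (auto intro: mult_left_mono)
        thus "\<bar>- (q * w * u w)\<bar> \<le> \<bar>q\<bar> * t * B" using \<open>0 \<le> w\<close> by (simp add: abs_mult)
      qed
      also have "\<dots> \<le> (\<bar>q\<bar> * t * B) * d"
        using yt B(1) tp by (intro mult_left_mono) auto
      finally have "s * y * \<bar>u1 y\<bar> \<le> \<bar>q\<bar> * t * B * d"
        using u1t inI[OF yI] s by (simp add: abs_mult)
      thus ?thesis using aux_div_bound inI[OF yI] s B(1) dpos by auto
    qed
    have "\<bar>u t - u x\<bar> \<le> (2 * \<bar>q\<bar> * B * d / s) * (t - x)"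
      by (rule lip[OF xt(1)]) (use du sub ok in auto)
    also have "\<dots> \<le> (2 * \<bar>q\<bar> * B * d / s) * d"
      using xt B(1) dpos s by (intro mult_left_mono) auto
    also have "\<dots> \<le> B / 2"
    proof -
      have "d * d \<le> d" using d1(3) dpos by (simp add: mult_left_le)
      also have "\<dots> \<le> s / (4 * (\<bar>q\<bar> + 1))" by (rule d1(4))
      finally have dd: "d * d \<le> s / (4 * (\<bar>q\<bar> + 1))" .
      have "(2 * \<bar>q\<bar> * B * d / s) * d = (2 * \<bar>q\<bar> * B / s) * (d * d)" by (simp add: algebra_simps)
      also have "\<dots> \<le> (2 * \<bar>q\<bar> * B / s) * (s / (4 * (\<bar>q\<bar> + 1)))"
        using dd B(1) s by (intro mult_left_mono) auto
      also have "\<dots> = B * (\<bar>q\<bar> / (2 * (\<bar>q\<bar> + 1)))" using s by (simp add: field_simps)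
      also have "\<dots> \<le> B * (1/2)"
        using B(1) by (intro mult_left_mono) (auto simp: field_simps)
      finally show ?thesis by simp
    qed
    finally show "\<bar>u x\<bar> \<le> B / 2" using ut by simp
  qed
  have "u (t - d) = 0"
    by (rule halving_zero[of I u "\<bar>u xm\<bar>"]) (use step xm dpos in \<open>auto simp: I_def\<close>)
  thus ?thesis using dpos d1 t by (intro exI[of _ "t - d"]) auto
qed

locale useting =
  fixes \<kappa> r0 R \<alpha> lam :: real and u u1 :: "real \<Rightarrow> real" and a b :: real
  assumes k0: "0 < \<kappa>" and r0: "0 < r0" and r0R: "r0 < R" and al: "0 \<le> \<alpha>"
    and ucont: "continuous_on {0..R} u"
    and uode: "solves_radial_ode \<kappa> r0 \<alpha> R lam 0 u u1"
    and ua: "(u1 \<longlongrightarrow> a) (at_left r0)" and ub: "(u1 \<longlongrightarrow> b) (at_right r0)"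
    and bab: "b - (1 + \<alpha> * \<kappa>) * a = 0"
    and uR: "u R = 0" and unz: "\<exists>r\<in>{0..R}. u r \<noteq> 0" and unn: "\<forall>r\<in>{0..R}. 0 \<le> u r"
begin

lemma sig_pos: "1 + \<alpha> * \<kappa> \<ge> 1" using al k0 by simp

lemma UI: "uph 0 r0 (1 + \<alpha> * \<kappa>) (lam + \<kappa>) u u1"
  unfolding uph_def
proof (intro allI impI)
  fix t assume t: "0 < t \<and> t < r0"
  have "t \<in> {0<..<r0} \<union> {r0<..<R}" using t by simp
  from ph_gen[OF uode this r0] t show "(u has_real_derivative u1 t) (at t) \<and>
      ((\<lambda>r. (1 + \<alpha> * \<kappa>) * r * u1 r) has_real_derivative - ((lam + \<kappa>) * t * u t)) (at t)"
    by (simp add: sigma_def mstar_def)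
qed

lemma UO: "uph r0 R 1 lam u u1"
  unfolding uph_def
proof (intro allI impI)
  fix t assume t: "r0 < t \<and> t < R"
  have "t \<in> {0<..<r0} \<union> {r0<..<R}" using t by simp
  from ph_gen[OF uode this r0] t show "(u has_real_derivative u1 t) (at t) \<and>
      ((\<lambda>r. 1 * r * u1 r) has_real_derivative - (lam * t * u t)) (at t)"
    by (simp add: sigma_def mstar_def)
qed

lemma u_der: "t \<in> {0<..<r0} \<union> {r0<..<R} \<Longrightarrow> (u has_real_derivative u1 t) (at t)"
  using UI UO unfolding uph_def by auto

lemma F_der: "0 < t \<Longrightarrow> t < r0 \<Longrightarrow>
   ((\<lambda>r. (1 + \<alpha> * \<kappa>) * r * u1 r) has_real_derivative - ((lam + \<kappa>) * t * u t)) (at t)"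
  using UI unfolding uph_def by auto

lemma G_der: "r0 < t \<Longrightarrow> t < R \<Longrightarrow>
   ((\<lambda>r. r * u1 r) has_real_derivative - (lam * t * u t)) (at t)"
  using UO unfolding uph_def by auto

lemma ucont_sub: "0 \<le> x \<Longrightarrow> y \<le> R \<Longrightarrow> continuous_on {x..y} u"
  using continuous_on_subset[OF ucont] by auto

lemma u_nn: "0 \<le> t \<Longrightarrow> t \<le> R \<Longrightarrow> 0 \<le> u t" using unn by auto

lemma lim_F_left: "((\<lambda>r. (1 + \<alpha> * \<kappa>) * r * u1 r) \<longlongrightarrow> (1 + \<alpha> * \<kappa>) * r0 * a) (at_left r0)"
  by (intro tendsto_intros ua)

lemma lim_G_right: "((\<lambda>r. r * u1 r) \<longlongrightarrow> r0 * b) (at_right r0)"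
  by (intro tendsto_intros ub)

lemma u_piece_mono:
  assumes "lo \<le> x" "x \<le> y" "y \<le> hi" "0 \<le> lo" "hi \<le> R"
    and "\<And>t. lo < t \<Longrightarrow> t < hi \<Longrightarrow> (u has_real_derivative u1 t) (at t)"
    and "\<And>t. lo < t \<Longrightarrow> t < hi \<Longrightarrow> u1 t \<ge> 0"
  shows "u x \<le> u y"
proof (rule DERIV_nonneg_imp_increasing_open[OF assms(2)])
  fix t assume "x < t" "t < y"
  thus "\<exists>l. (u has_real_derivative l) (at t) \<and> 0 \<le> l" using assms by force
next
  show "continuous_on {x..y} u" using ucont_sub assms by simp
qed

lemma u_piece_anti:
  assumes "lo \<le> x" "x \<le> y" "y \<le> hi" "0 \<le> lo" "hi \<le> R"
    and "\<And>t. lo < t \<Longrightarrow> t < hi \<Longrightarrow> (u has_real_derivative u1 t) (at t)"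
    and "\<And>t. lo < t \<Longrightarrow> t < hi \<Longrightarrow> u1 t \<le> 0"
  shows "u y \<le> u x"
proof (rule DERIV_nonpos_imp_decreasing_open[OF assms(2)])
  fix t assume "x < t" "t < y"
  thus "\<exists>l. (u has_real_derivative l) (at t) \<and> l \<le> 0" using assms by force
next
  show "continuous_on {x..y} u" using ucont_sub assms by simp
qed

lemma u_zero_contra:
  assumes "\<And>t. 0 \<le> t \<Longrightarrow> t \<le> R \<Longrightarrow> u t \<le> 0" shows False
  using unz assms unn by force

lemma q_pos: "lam + \<kappa> > 0"
proof (rule ccontr)
  assume "\<not> lam + \<kappa> > 0"
  hence qn: "lam + \<kappa> \<le> 0" by simp
  have Fmono: "(1 + \<alpha> * \<kappa>) * x * u1 x \<le> (1 + \<alpha> * \<kappa>) * y * u1 y" if "0 < x" "x \<le> y" "y < r0" for x y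
  proof (rule nondecr_open[where f = "\<lambda>r. (1 + \<alpha> * \<kappa>) * r * u1 r" and lo = 0 and hi = r0])
    fix t assume t: "0 < t" "t < r0"
    show "((\<lambda>r. (1 + \<alpha> * \<kappa>) * r * u1 r) has_real_derivative - ((lam + \<kappa>) * t * u t)) (at t)"
      by (rule F_der[OF t])
    have "0 \<le> u t" using u_nn t r0R by simp
    thus "0 \<le> - ((lam + \<kappa>) * t * u t)" using qn t by (simp add: mult_nonpos_nonneg)
  qed (use that in auto)
  have u1nn: "u1 t \<ge> 0" if t: "0 < t" "t < r0" for t
  proof (rule ccontr)
    assume "\<not> u1 t \<ge> 0"
    hence neg: "u1 t < 0" by simp
    show False
    proof (rule log_blowup[of t "\<lambda>r. - u r" "\<lambda>r. - u1 r" "- (t * u1 t)"])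
      show "0 < t" by (rule t(1))
      show "continuous_on {0..t} (\<lambda>r. - u r)" using ucont_sub[of 0 t] t r0R
        by (intro continuous_on_minus) auto
      fix x assume x: "0 < x" "x < t"
      show "((\<lambda>r. - u r) has_real_derivative - u1 x) (at x)"
        using u_der[of x] x t by (intro DERIV_minus) auto
      have "(1 + \<alpha> * \<kappa>) * x * u1 x \<le> (1 + \<alpha> * \<kappa>) * t * u1 t" using Fmono[of x t] x t by simp
      hence "x * u1 x \<le> t * u1 t" using sig_pos by (simp add: mult.assoc)
      hence "u1 x \<le> t * u1 t / x" using x by (simp add: le_divide_eq mult.commute)
      thus "- (t * u1 t) / x \<le> - u1 x" by simp
    next
      show "0 < - (t * u1 t)" using neg t by (simp add: mult_pos_neg)
    qed
  qed
  have "0 \<le> a" by (rule lim_left_ge[OF r0 ua]) (use u1nn in auto)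
  hence b0: "0 \<le> b" using bab sig_pos by (simp add: algebra_simps) (metis add_nonneg_nonneg mult_nonneg_nonneg al k0 less_imp_le)
  have u1out: "u1 t \<ge> 0" if t: "r0 < t" "t < R" for t
  proof -
    have "r0 * b \<le> t * u1 t"
    proof (rule lim_right_le[OF t(1) lim_G_right])
      fix s assume s: "r0 < s" "s < t"
      show "s * u1 s \<le> t * u1 t"
      proof (rule nondecr_open[where f = "\<lambda>r. r * u1 r" and lo = r0 and hi = R])
        fix y assume y: "r0 < y" "y < R"
        show "((\<lambda>r. r * u1 r) has_real_derivative - (lam * y * u y)) (at y)" by (rule G_der[OF y])
        have "0 \<le> u y" using u_nn y r0 by simp
        moreover have "lam < 0" using qn k0 by simp
        ultimately show "0 \<le> - (lam * y * u y)" using y r0 by (simp add: mult_nonpos_nonneg mult_nonneg_nonneg)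
      qed (use s t in auto)
    qed
    hence "0 \<le> t * u1 t" using b0 r0 by (meson mult_nonneg_nonneg less_imp_le order_trans)
    thus ?thesis using t r0 by (simp add: zero_le_mult_iff)
  qed
  have ur0: "u r0 \<le> 0"
    using u_piece_mono[of r0 r0 R R] u1out u_der uR r0 r0R by auto
  show False
  proof (rule u_zero_contra)
    fix t assume t: "0 \<le> t" "t \<le> R"
    show "u t \<le> 0"
    proof (cases "t \<le> r0")
      case True
      have "u t \<le> u r0" using u_piece_mono[of 0 t r0 r0] True t u1nn u_der r0R by auto
      thus ?thesis using ur0 by simp
    next
      case False
      have "u t \<le> u R" using u_piece_mono[of r0 t R R] False t u1out u_der r0R r0 by auto
      thus ?thesis using uR by simp
    qed
  qed
qed

lemma Fanti: "(1 + \<alpha> * \<kappa>) * y * u1 y \<le> (1 + \<alpha> * \<kappa>) * x * u1 x" if "0 < x" "x \<le> y" "y < r0" for x y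
proof (rule nonincr_open[where f = "\<lambda>r. (1 + \<alpha> * \<kappa>) * r * u1 r" and lo = 0 and hi = r0])
  fix t assume t: "0 < t" "t < r0"
  show "((\<lambda>r. (1 + \<alpha> * \<kappa>) * r * u1 r) has_real_derivative - ((lam + \<kappa>) * t * u t)) (at t)"
    by (rule F_der[OF t])
  have "0 \<le> u t" using u_nn t r0R by simp
  thus "- ((lam + \<kappa>) * t * u t) \<le> 0" using q_pos t by (simp add: mult_nonneg_nonneg)
qed (use that in auto)

lemma u1_in_nonpos: "u1 t \<le> 0" if t: "0 < t" "t < r0" for t
proof (rule ccontr)
  assume "\<not> u1 t \<le> 0"
  hence pos: "u1 t > 0" by simp
  show False
  proof (rule log_blowup[of t u u1 "t * u1 t"])
    show "0 < t" by (rule t(1))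
    show "continuous_on {0..t} u" using ucont_sub[of 0 t] t r0R by auto
    fix x assume x: "0 < x" "x < t"
    show "(u has_real_derivative u1 x) (at x)" using u_der[of x] x t by auto
    have "(1 + \<alpha> * \<kappa>) * t * u1 t \<le> (1 + \<alpha> * \<kappa>) * x * u1 x" using Fanti[of x t] x t by simp
    hence "t * u1 t \<le> x * u1 x" using sig_pos by (simp add: mult.assoc)
    thus "t * u1 t / x \<le> u1 x" using x by (simp add: divide_le_eq mult.commute)
  next
    show "0 < t * u1 t" using pos t by simp
  qed
qed

lemma a_nonpos: "a \<le> 0"
  by (rule lim_left_le[OF r0 ua]) (use u1_in_nonpos in auto)

lemma b_eq: "b = (1 + \<alpha> * \<kappa>) * a" using bab by simp

lemma b_nonpos: "b \<le> 0"
  using a_nonpos sig_pos b_eq by (simp add: mult_nonneg_nonpos)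

lemma b_le_a: "b \<le> a"
proof -
  have "(1 + \<alpha> * \<kappa>) * a \<le> 1 * a" using a_nonpos sig_pos by (intro mult_right_mono_neg) auto
  thus ?thesis using b_eq by simp
qed

lemma u1_out_nonpos: "u1 t \<le> 0" if t: "r0 < t" "t < R" for t
proof (cases "lam \<ge> 0")
  case True
  have "t * u1 t \<le> r0 * b"
  proof (rule lim_right_ge[OF t(1) lim_G_right])
    fix s assume s: "r0 < s" "s < t"
    show "t * u1 t \<le> s * u1 s"
    proof (rule nonincr_open[where f = "\<lambda>r. r * u1 r" and lo = r0 and hi = R])
      fix y assume y: "r0 < y" "y < R"
      show "((\<lambda>r. r * u1 r) has_real_derivative - (lam * y * u y)) (at y)" by (rule G_der[OF y])
      have "0 \<le> u y" using u_nn y r0 by simp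
      thus "- (lam * y * u y) \<le> 0" using True y r0 by (simp add: mult_nonneg_nonneg)
    qed (use s t in auto)
  qed
  also have "\<dots> \<le> 0" using b_nonpos r0 by (simp add: mult_nonneg_nonpos)
  finally show ?thesis using t r0 by (simp add: mult_le_0_iff)
next
  case False
  show ?thesis
  proof (rule ccontr)
    assume "\<not> u1 t \<le> 0"
    hence pos: "u1 t > 0" by simp
    have "u t < u R"
    proof (rule DERIV_pos_imp_increasing_open[OF t(2)])
      fix x assume x: "t < x" "x < R"
      have "t * u1 t \<le> x * u1 x"
      proof (rule nondecr_open[where f = "\<lambda>r. r * u1 r" and lo = r0 and hi = R])
        fix y assume y: "r0 < y" "y < R"
        show "((\<lambda>r. r * u1 r) has_real_derivative - (lam * y * u y)) (at y)" by (rule G_der[OF y])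
        have "0 \<le> u y" using u_nn y r0 by simp
        thus "0 \<le> - (lam * y * u y)" using False y r0 by (simp add: mult_nonpos_nonneg mult_nonneg_nonneg)
      qed (use x t in auto)
      moreover have "0 < t * u1 t" using pos t r0 by simp
      ultimately have "0 < x * u1 x" by linarith
      hence "u1 x > 0" using x t r0 by (simp add: zero_less_mult_iff)
      thus "\<exists>y. (u has_real_derivative y) (at x) \<and> 0 < y" using u_der[of x] x t by auto
    next
      show "continuous_on {t..R} u" using ucont_sub[of t R] t r0 by auto
    qed
    thus False using uR u_nn[of t] t r0 by simp
  qed
qed

lemma u_antimono: "u y \<le> u x" if "0 \<le> x" "x \<le> y" "y \<le> R" for x y
proof -
  have in1: "u y' \<le> u x'" if "0 \<le> x'" "x' \<le> y'" "y' \<le> r0" for x' y'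
    using u_piece_anti[of 0 x' y' r0] that u_der u1_in_nonpos r0R by auto
  have out1: "u y' \<le> u x'" if "r0 \<le> x'" "x' \<le> y'" "y' \<le> R" for x' y'
    using u_piece_anti[of r0 x' y' R] that u_der u1_out_nonpos r0 by auto
  show ?thesis
  proof (cases "y \<le> r0")
    case True thus ?thesis using in1 that by simp
  next
    case False
    show ?thesis
    proof (cases "r0 \<le> x")
      case True thus ?thesis using out1 that by simp
    next
      case False
      hence "u r0 \<le> u x" using in1[of x r0] that by simp
      moreover have "u y \<le> u r0" using out1[of r0 y] that \<open>\<not> y \<le> r0\<close> by simp
      ultimately show ?thesis by simp
    qed
  qed
qed

lemma u0_pos: "u 0 > 0"
proof (rule ccontr)
  assume "\<not> u 0 > 0"
  hence "u 0 \<le> 0" by simp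
  thus False using u_zero_contra u_antimono[of 0] by force
qed

lemma u1_zero_at_zero:
  assumes "t \<in> {0<..<r0} \<union> {r0<..<R}" "u t = 0" shows "u1 t = 0"
proof (rule DERIV_local_min[OF u_der[OF assms(1)], of "min t (R - t)"])
  show "0 < min t (R - t)" using assms(1) r0 r0R by auto
  show "\<forall>y. \<bar>t - y\<bar> < min t (R - t) \<longrightarrow> u t \<le> u y"
  proof (intro allI impI)
    fix y assume "\<bar>t - y\<bar> < min t (R - t)"
    hence "0 \<le> y" "y \<le> R" by (auto simp: abs_less_iff)
    thus "u t \<le> u y" using assms(2) u_nn by simp
  qed
qed

lemma u_pos: "u t > 0" if t: "0 \<le> t" "t < R" for t
proof (rule ccontr)
  assume "\<not> u t > 0"
  hence ut0: "u t = 0" using u_nn[of t] t by simp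
  define Z where "Z = {x \<in> {0..R}. u x = 0}"
  have Zcl: "closed Z" unfolding Z_def by (rule continuous_closed_preimage_constant[OF ucont]) simp
  have tZ: "t \<in> Z" using t ut0 by (simp add: Z_def)
  have Zbdd: "bdd_below Z" unfolding Z_def by (rule bdd_belowI[of _ 0]) simp
  define ts where "ts = Inf Z"
  have tsZ: "ts \<in> Z" unfolding ts_def using closed_contains_Inf[OF _ Zbdd Zcl] tZ by blast
  have tsle: "ts \<le> t" unfolding ts_def using cInf_lower[OF tZ Zbdd] .
  have min: "u y \<noteq> 0" if "0 \<le> y" "y < ts" for y
  proof
    assume "u y = 0"
    hence "y \<in> Z" using that tsle t by (simp add: Z_def)
    hence "ts \<le> y" unfolding ts_def using cInf_lower[OF _ Zbdd] by blast
    thus False using that by simp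
  qed
  have uts: "u ts = 0" "0 \<le> ts" "ts \<le> R" using tsZ by (auto simp: Z_def)
  have tsR: "ts < R" using tsle t by simp
  have tspos: "ts > 0" using uts u0_pos by (cases "ts = 0") auto
  have zero_after: "u x = 0" if "ts \<le> x" "x \<le> R" for x
    using u_antimono[of ts x] u_nn[of x] uts that by simp
  consider "ts < r0" | "ts = r0" | "r0 < ts" by linarith
  thus False
  proof cases
    case 1
    have "ts \<in> {0<..<r0} \<union> {r0<..<R}" using 1 tspos by simp
    hence "u1 ts = 0" using u1_zero_at_zero uts by simp
    then obtain y where "0 < y" "y < ts" "u y = 0"
      using local_zero[OF UI _ _ tspos 1 uts(1)] sig_pos by auto
    thus False using min by simp
  next
    case 3
    have "ts \<in> {0<..<r0} \<union> {r0<..<R}" using 3 tsR by simp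
    hence "u1 ts = 0" using u1_zero_at_zero uts by simp
    then obtain y where "r0 < y" "y < ts" "u y = 0"
      using local_zero[OF UO _ _ 3 tsR uts(1)] r0 by auto
    thus False using min r0 by simp
  next
    case 2
    have u1z: "u1 s = 0" if "r0 < s" "s < R" for s
      using u1_zero_at_zero[of s] zero_after[of s] that 2 by simp
    have "b \<le> 0" by (rule b_nonpos)
    moreover have "0 \<le> b" by (rule lim_right_ge[OF r0R ub]) (use u1z in auto)
    ultimately have "b = 0" by simp
    hence a0: "a = 0" using b_eq sig_pos by simp
    have u1nn: "u1 x \<ge> 0" if x: "0 < x" "x < r0" for x
    proof -
      have "(1 + \<alpha> * \<kappa>) * r0 * a \<le> (1 + \<alpha> * \<kappa>) * x * u1 x"
        by (rule lim_left_le[OF x(2) lim_F_left]) (use Fanti x in auto)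
      hence "0 \<le> (1 + \<alpha> * \<kappa>) * (x * u1 x)" using a0 by (simp add: mult.assoc)
      hence "0 \<le> x * u1 x" using sig_pos by (simp add: zero_le_mult_iff)
      thus ?thesis using x by (simp add: zero_le_mult_iff)
    qed
    have "u 0 \<le> u r0" using u_piece_mono[of 0 0 r0 r0] u1nn u_der r0 r0R by auto
    thus False using u0_pos uts 2 by simp
  qed
qed

definition "Vb = max (\<kappa> * R^2 / r0) (2 * R / (r0 * (R - r0)))"

lemma Vb_pos: "Vb > 0" unfolding Vb_def using k0 r0 r0R by (simp add: less_max_iff_disj)

lemma b_bound: "- b \<le> Vb * u r0"
proof (rule ccontr)
  assume "\<not> - b \<le> Vb * u r0"
  hence big: "- b > Vb * u r0" by simp
  define u0 where "u0 = u r0"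
  have u0p: "u0 > 0" using u_pos r0 r0R by (simp add: u0_def)
  have V1: "\<kappa> * R^2 / r0 \<le> Vb" "2 * R / (r0 * (R - r0)) \<le> Vb" unfolding Vb_def by simp_all
  have "Vb * u r0 > 0" using Vb_pos u0p by (simp add: u0_def)
  hence bneg: "b < 0" using big by linarith
  have Hle: "t * u1 t - \<kappa> * u0 * t^2 / 2 \<le> r0 * b - \<kappa> * u0 * r0^2 / 2" if t: "r0 < t" "t < R" for t
  proof (rule lim_right_ge[OF t(1)])
    show "((\<lambda>r. r * u1 r - \<kappa> * u0 * r^2 / 2) \<longlongrightarrow> r0 * b - \<kappa> * u0 * r0^2 / 2) (at_right r0)"
      by (intro tendsto_intros ub) auto
    fix s assume s: "r0 < s" "s < t"
    show "t * u1 t - \<kappa> * u0 * t^2 / 2 \<le> s * u1 s - \<kappa> * u0 * s^2 / 2"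
    proof (rule nonincr_open[where f = "\<lambda>r. r * u1 r - \<kappa> * u0 * r^2 / 2" and lo = r0 and hi = R])
      fix y assume y: "r0 < y" "y < R"
      show "((\<lambda>r. r * u1 r - \<kappa> * u0 * r^2 / 2) has_real_derivative (- (lam * y * u y) - \<kappa> * u0 * y)) (at y)"
      proof -
        have d2: "((\<lambda>r. \<kappa> * u0 * r^2 / 2) has_real_derivative \<kappa> * u0 * y) (at y)"
          by (auto intro!: derivative_eq_intros)
        show ?thesis using DERIV_diff[OF G_der[OF y] d2] by simp
      qed
      have uy: "0 \<le> u y" "u y \<le> u0" using u_nn u_antimono[of r0 y] y r0 by (auto simp: u0_def)
      have "- lam < \<kappa>" using q_pos by simp
      hence "- lam * (y * u y) \<le> \<kappa> * (y * u y)" using uy y r0 by (intro mult_right_mono) auto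
      also have "\<dots> \<le> \<kappa> * (y * u0)" using uy y r0 k0 by (intro mult_left_mono) auto
      finally show "- (lam * y * u y) - \<kappa> * u0 * y \<le> 0" by (simp add: algebra_simps)
    qed (use s t in auto)
  qed
  have key: "u1 t < r0 * b / (2 * R)" if t: "r0 < t" "t < R" for t
  proof -
    have "t * u1 t \<le> r0 * b + \<kappa> * u0 * (t^2 - r0^2) / 2" using Hle[OF t] by (simp add: algebra_simps diff_divide_distrib)
    also have "\<dots> \<le> r0 * b + \<kappa> * u0 * R^2 / 2"
    proof -
      have "t^2 \<le> R^2" using t r0 by (intro power_mono) auto
      hence "t^2 - r0^2 \<le> R^2" by (smt (verit) zero_le_power2)
      thus ?thesis using k0 u0p by (simp add: mult_left_mono)
    qed
    also have "\<dots> < r0 * b / 2"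
    proof -
      have "\<kappa> * R^2 / r0 * u0 \<le> Vb * u0" using V1(1) u0p by (intro mult_right_mono) auto
      hence "\<kappa> * R^2 / r0 * u0 < - b" using big by (simp add: u0_def)
      hence "\<kappa> * R^2 * u0 < - b * r0" using r0 by (simp add: field_simps)
      thus ?thesis by (simp add: algebra_simps)
    qed
    finally have "t * u1 t < r0 * b / 2" .
    hence "u1 t < r0 * b / (2 * t)" using t r0 by (simp add: field_simps)
    also have "\<dots> \<le> r0 * b / (2 * R)"
    proof -
      have "r0 * b < 0" using bneg r0 by (simp add: mult_pos_neg)
      moreover have "2 * t \<le> 2 * R" "0 < 2 * t" using t r0 by auto
      ultimately show ?thesis by (intro divide_left_mono_neg) auto
    qed
    finally show ?thesis .
  qed
  obtain l z where lz: "r0 < z" "z < R" "DERIV u z :> l" "u R - u r0 = (R - r0) * l"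
  proof -
    have "continuous_on {r0..R} u" using ucont_sub[of r0 R] r0 by simp
    moreover have "u differentiable (at x)" if "r0 < x" "x < R" for x
      using u_der[of x] that real_differentiable_def by auto
    ultimately show ?thesis using MVT[OF r0R, of u] that by blast
  qed
  have "l = u1 z" using DERIV_unique[OF lz(3) u_der[of z]] lz by simp
  hence "(R - r0) * l < (R - r0) * (r0 * b / (2 * R))" using key[OF lz(1,2)] r0R
    by (intro mult_strict_left_mono) auto
  hence "- u0 < (R - r0) * (r0 * b / (2 * R))" using lz(4) uR by (simp add: u0_def)
  hence "- b * (r0 * (R - r0)) < 2 * R * u0" using r0 r0R by (simp add: field_simps)
  hence "- b < 2 * R / (r0 * (R - r0)) * u0" using r0 r0R by (simp add: field_simps)
  also have "\<dots> \<le> Vb * u0" using mult_right_mono[OF V1(2)] u0p by simp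
  finally show False using big by (simp add: u0_def)
qed

end

lemma zph_neg: "zph lo hi s q z z1 \<Longrightarrow> zph lo hi s q (\<lambda>r. - z r) (\<lambda>r. - z1 r)"
  unfolding zph_def
proof (intro allI impI)
  fix t assume A: "\<forall>t. lo < t \<and> t < hi \<longrightarrow> (z has_real_derivative z1 t) (at t) \<and>
      ((\<lambda>r. s * r * z1 r) has_real_derivative z t / t - q * t * z t) (at t)" and t: "lo < t \<and> t < hi"
  from A t have d1: "(z has_real_derivative z1 t) (at t)"
    and d2: "((\<lambda>r. s * r * z1 r) has_real_derivative z t / t - q * t * z t) (at t)" by auto
  show "((\<lambda>r. - z r) has_real_derivative - z1 t) (at t) \<and>
      ((\<lambda>r. s * r * - z1 r) has_real_derivative - z t / t - q * t * - z t) (at t)"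
    using DERIV_minus[OF d1] DERIV_minus[OF d2] by (simp add: algebra_simps)
qed

context useting
begin

lemma ZI_of: "solves_radial_ode \<kappa> r0 \<alpha> R lam 1 z z1 \<Longrightarrow> zph 0 r0 (1 + \<alpha> * \<kappa>) (lam + \<kappa>) z z1"
  unfolding zph_def
proof (intro allI impI)
  fix t assume S: "solves_radial_ode \<kappa> r0 \<alpha> R lam 1 z z1" and t: "0 < t \<and> t < r0"
  have "t \<in> {0<..<r0} \<union> {r0<..<R}" using t by simp
  from ph_gen[OF S this r0] t show "(z has_real_derivative z1 t) (at t) \<and>
      ((\<lambda>r. (1 + \<alpha> * \<kappa>) * r * z1 r) has_real_derivative z t / t - (lam + \<kappa>) * t * z t) (at t)"
    by (simp add: sigma_def mstar_def)
qed

lemma ZO_of: "solves_radial_ode \<kappa> r0 \<alpha> R lam 1 z z1 \<Longrightarrow> zph r0 R 1 lam z z1"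
  unfolding zph_def
proof (intro allI impI)
  fix t assume S: "solves_radial_ode \<kappa> r0 \<alpha> R lam 1 z z1" and t: "r0 < t \<and> t < R"
  have "t \<in> {0<..<r0} \<union> {r0<..<R}" using t by simp
  from ph_gen[OF S this r0] t show "(z has_real_derivative z1 t) (at t) \<and>
      ((\<lambda>r. 1 * r * z1 r) has_real_derivative z t / t - lam * t * z t) (at t)"
    by (simp add: sigma_def mstar_def)
qed

lemma u_lim_left: "0 \<le> lo \<Longrightarrow> lo < x \<Longrightarrow> x \<le> R \<Longrightarrow> (u \<longlongrightarrow> u x) (at_left x)"
  using continuous_on_Icc_at_leftD[OF ucont_sub[of lo x]] by simp

lemma u_lim_right: "0 \<le> x \<Longrightarrow> x < hi \<Longrightarrow> hi \<le> R \<Longrightarrow> (u \<longlongrightarrow> u x) (at_right x)"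
  using continuous_on_Icc_at_rightD[OF ucont_sub[of x hi]] by simp

lemma W_lim_R:
  assumes Z: "zph r0 R 1 lam z z1" and zc: "continuous_on {r0<..R} z" and zR: "z R = 0"
  shows "(wr 1 u u1 z z1 \<longlongrightarrow> 0) (at_left R)"
proof -
  define c where "c = (r0 + R) / 2"
  have c: "r0 < c" "c < R" using r0R by (auto simp: c_def)
  have cpos: "c > 0" using c r0 by simp
  have "{c..R} \<subseteq> {r0<..R}" using c by auto
  hence zcc: "continuous_on {c..R} z" using continuous_on_subset[OF zc] by blast
  have ucc: "continuous_on {c..R} u" using ucont_sub[of c R] cpos by simp
  obtain xu where xu: "xu \<in> {c..R}" "\<And>y. y \<in> {c..R} \<Longrightarrow> \<bar>u y\<bar> \<le> \<bar>u xu\<bar>"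
    using continuous_attains_sup[OF compact_Icc _ continuous_on_rabs[OF ucc]] c by fastforce
  obtain xz where xz: "xz \<in> {c..R}" "\<And>y. y \<in> {c..R} \<Longrightarrow> \<bar>z y\<bar> \<le> \<bar>z xz\<bar>"
    using continuous_attains_sup[OF compact_Icc _ continuous_on_rabs[OF zcc]] c by fastforce
  define Bu where "Bu = \<bar>u xu\<bar>"
  define Bz where "Bz = \<bar>z xz\<bar>"
  have Bu0: "Bu \<ge> 0" and Bz0: "Bz \<ge> 0" by (auto simp: Bu_def Bz_def)
  define Ku where "Ku = \<bar>c * u1 c\<bar> + (\<bar>lam\<bar> * R * Bu) * R"
  define Kz where "Kz = \<bar>c * z1 c\<bar> + (Bz / c + \<bar>lam\<bar> * R * Bz) * R"
  have boundu: "\<bar>x * u1 x\<bar> \<le> Ku" if x: "c \<le> x" "x < R" for x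
  proof -
    have "\<bar>x * u1 x - c * u1 c\<bar> \<le> (\<bar>lam\<bar> * R * Bu) * (x - c)"
    proof (rule lip[OF x(1)])
      fix y assume y: "c \<le> y" "y \<le> x"
      show "((\<lambda>r. r * u1 r) has_real_derivative - (lam * y * u y)) (at y)"
        using G_der[of y] y x c by simp
      have "\<bar>u y\<bar> \<le> Bu" using xu(2)[of y] y x by (simp add: Bu_def)
      moreover have "0 \<le> y" "y \<le> R" using y x cpos by auto
      ultimately have "\<bar>lam\<bar> * y * \<bar>u y\<bar> \<le> \<bar>lam\<bar> * R * Bu"
        by (intro mult_mono) (auto intro: mult_left_mono)
      thus "\<bar>- (lam * y * u y)\<bar> \<le> \<bar>lam\<bar> * R * Bu" using \<open>0 \<le> y\<close> by (simp add: abs_mult)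
    qed
    also have "\<dots> \<le> (\<bar>lam\<bar> * R * Bu) * R" using x cpos Bu0 r0R r0
      by (intro mult_left_mono) auto
    finally show ?thesis unfolding Ku_def by linarith
  qed
  have boundz: "\<bar>x * z1 x\<bar> \<le> Kz" if x: "c \<le> x" "x < R" for x
  proof -
    have "\<bar>1 * x * z1 x - 1 * c * z1 c\<bar> \<le> (Bz / c + \<bar>lam\<bar> * R * Bz) * (x - c)"
    proof (rule lip[OF x(1)])
      fix y assume y: "c \<le> y" "y \<le> x"
      show "((\<lambda>r. 1 * r * z1 r) has_real_derivative z y / y - lam * y * z y) (at y)"
        using Z y x c unfolding zph_def by auto
      have zy: "\<bar>z y\<bar> \<le> Bz" using xz(2)[of y] y x by (simp add: Bz_def)
      have yp: "0 < y" "c \<le> y" "y \<le> R" using y x cpos by auto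
      have "\<bar>z y / y\<bar> \<le> Bz / c"
      proof -
        have "\<bar>z y\<bar> / y \<le> Bz / y" using zy yp by (simp add: divide_right_mono)
        also have "\<dots> \<le> Bz / c" using yp cpos Bz0 by (simp add: divide_left_mono)
        finally show ?thesis using yp by simp
      qed
      moreover have "\<bar>lam * y * z y\<bar> \<le> \<bar>lam\<bar> * R * Bz"
      proof -
        have "\<bar>lam\<bar> * y * \<bar>z y\<bar> \<le> \<bar>lam\<bar> * R * Bz"
          using zy yp by (intro mult_mono) (auto intro: mult_left_mono)
        thus ?thesis using yp by (simp add: abs_mult)
      qed
      ultimately show "\<bar>z y / y - lam * y * z y\<bar> \<le> Bz / c + \<bar>lam\<bar> * R * Bz" by linarith
    qed
    also have "\<dots> \<le> (Bz / c + \<bar>lam\<bar> * R * Bz) * R" using x cpos Bz0 r0R r0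
      by (intro mult_left_mono) auto
    finally show ?thesis unfolding Kz_def by simp
  qed
  have ul: "(u \<longlongrightarrow> 0) (at_left R)" using u_lim_left[of 0 R] uR r0 r0R by simp
  have zl: "(z \<longlongrightarrow> 0) (at_left R)" using continuous_on_Icc_at_leftD[OF zcc c(2)] zR by simp
  show ?thesis
  proof (rule Lim_null_comparison)
    show "((\<lambda>x. \<bar>u x\<bar> * Kz + \<bar>z x\<bar> * Ku) \<longlongrightarrow> 0) (at_left R)"
      using tendsto_add[OF tendsto_mult_left_zero[OF tendsto_rabs_zero[OF ul], of Kz]
          tendsto_mult_left_zero[OF tendsto_rabs_zero[OF zl], of Ku]] by simp
    show "\<forall>\<^sub>F x in at_left R. norm (wr 1 u u1 z z1 x) \<le> \<bar>u x\<bar> * Kz + \<bar>z x\<bar> * Ku"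
      unfolding eventually_at_left_field
    proof (intro exI[of _ c] conjI allI impI)
      show "c < R" by (rule c(2))
      fix x assume x: "c < x" "x < R"
      have "\<bar>u x * (1 * x * z1 x)\<bar> \<le> \<bar>u x\<bar> * Kz"
        using boundz[of x] x by (simp add: abs_mult mult_left_mono)
      moreover have "\<bar>z x * (1 * x * u1 x)\<bar> \<le> \<bar>z x\<bar> * Ku"
        using boundu[of x] x by (simp add: abs_mult mult_left_mono)
      ultimately show "norm (wr 1 u u1 z z1 x) \<le> \<bar>u x\<bar> * Kz + \<bar>z x\<bar> * Ku"
        unfolding wr_def real_norm_def by (smt (verit) abs_triangle_ineq4)
    qed
  qed
qed

end

context useting
begin

lemma rho_cont:
  assumes "0 \<le> x" "y < R" "continuous_on {x..y} z"
  shows "continuous_on {x..y} (\<lambda>r. z r / u r)"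
proof (rule continuous_on_divide[OF assms(3)])
  show "continuous_on {x..y} u" using ucont_sub[of x y] assms by simp
  show "\<forall>r\<in>{x..y}. u r \<noteq> 0"
  proof
    fix r assume "r \<in> {x..y}"
    hence "0 \<le> r" "r < R" using assms by auto
    thus "u r \<noteq> 0" using u_pos[of r] by simp
  qed
qed

lemma sign_in:
  assumes Z: "zph 0 r0 (1 + \<alpha> * \<kappa>) (lam + \<kappa>) z z1" and zc: "continuous_on {0..<r0} z"
    and z0: "z 0 = 0" and zl: "(z \<longlongrightarrow> zi) (at_left r0)" and zi: "zi \<ge> 0"
    and t: "0 < t" "t < r0"
  shows "z t \<ge> 0"
proof (rule ccontr)
  assume "\<not> z t \<ge> 0"
  hence zt: "z t < 0" by simp
  define \<rho> where "\<rho> = (\<lambda>r. z r / u r)"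
  have upos: "u x > 0" if "0 \<le> x" "x < R" for x using u_pos that by simp
  have ut: "u t > 0" using upos t r0R by simp
  have \<rho>t: "\<rho> t < 0" using zt ut by (simp add: \<rho>_def divide_neg_pos)
  have ur0: "u r0 > 0" using upos r0 r0R by simp
  have \<rho>lim: "(\<rho> \<longlongrightarrow> zi / u r0) (at_left r0)"
    unfolding \<rho>_def using tendsto_divide[OF zl u_lim_left[of 0 r0]] ur0 r0 r0R by simp
  have "\<rho> t < zi / u r0" using \<rho>t zi ur0 by (smt (verit) divide_nonneg_pos)
  hence "\<forall>\<^sub>F x in at_left r0. \<rho> t < \<rho> x" using order_tendstoD(1)[OF \<rho>lim] by blast
  then obtain b' where b': "b' < r0" "\<And>y. b' < y \<Longrightarrow> y < r0 \<Longrightarrow> \<rho> t < \<rho> y"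
    unfolding eventually_at_left_field by blast
  define h' where "h' = (max b' t + r0) / 2"
  have h': "t < h'" "h' < r0" "b' < h'" using b' t unfolding h'_def by (auto simp: max_def)
  have \<rho>h': "\<rho> t < \<rho> h'" using b'(2) h' by simp
  show False
  proof (rule core_min[of 0 t h' \<rho>])
    show "0 < t" "t < h'" by (rule t(1), rule h'(1))
    have "{0..h'} \<subseteq> {0..<r0}" using h' by auto
    hence "continuous_on {0..h'} z" using continuous_on_subset[OF zc] by blast
    thus "continuous_on {0..h'} \<rho>" unfolding \<rho>_def using rho_cont h' r0R by simp
    show "\<rho> t < \<rho> 0" using \<rho>t z0 by (simp add: \<rho>_def)
    show "\<rho> t < \<rho> h'" by (rule \<rho>h')
    show "\<rho> t < 0" by (rule \<rho>t)
    fix x assume x: "0 < x" "x < h'"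
    have xl: "0 < x" "x < r0" using x h' by auto
    show "\<exists>d. (\<rho> has_real_derivative d) (at x)"
      unfolding \<rho>_def using rho_deriv[OF UI Z xl _ _] upos[of x] xl sig_pos r0R by force
    assume neg: "\<rho> x < 0" and d0: "(\<rho> has_real_derivative 0) (at x)"
    obtain d where d: "d > 0" "\<forall>h>0. h < d \<longrightarrow> x + h < r0 \<longrightarrow> z (x + h) / u (x + h) < z x / u x"
      using rho_local[OF UI Z _ _ _ xl] neg d0 upos r0R sig_pos unfolding \<rho>_def by force
    show "\<exists>d>0. \<forall>h>0. h < d \<longrightarrow> x + h < h' \<longrightarrow> \<rho> (x + h) < \<rho> x"
      using d h' unfolding \<rho>_def by force
  qed
qed

lemma sign_out:
  assumes Z: "zph r0 R 1 lam z z1" and zc: "continuous_on {r0<..R} z"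
    and zR: "z R = 0" and zl: "(z \<longlongrightarrow> ze) (at_right r0)" and ze: "ze \<ge> 0"
    and t: "r0 < t" "t < R"
  shows "z t \<ge> 0"
proof (rule ccontr)
  assume "\<not> z t \<ge> 0"
  hence zt: "z t < 0" by simp
  define \<rho> where "\<rho> = (\<lambda>r. z r / u r)"
  define W where "W = wr 1 u u1 z z1"
  have upos: "u x > 0" if "0 \<le> x" "x < R" for x using u_pos that by simp
  have ut: "u t > 0" using upos t r0 by simp
  have \<rho>t: "\<rho> t < 0" using zt ut by (simp add: \<rho>_def divide_neg_pos)
  have ur0: "u r0 > 0" using upos r0 r0R by simp
  have \<rho>lim: "(\<rho> \<longlongrightarrow> ze / u r0) (at_right r0)"
    unfolding \<rho>_def using tendsto_divide[OF zl u_lim_right[of r0 R]] ur0 r0 r0R by simp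
  have "\<rho> t < ze / u r0" using \<rho>t ze ur0 by (smt (verit) divide_nonneg_pos)
  hence "\<forall>\<^sub>F x in at_right r0. \<rho> t < \<rho> x" using order_tendstoD(1)[OF \<rho>lim] by blast
  then obtain b' where b': "r0 < b'" "\<And>y. r0 < y \<Longrightarrow> y < b' \<Longrightarrow> \<rho> t < \<rho> y"
    unfolding eventually_at_right_field by blast
  define l' where "l' = (r0 + min b' t) / 2"
  have l': "r0 < l'" "l' < t" "l' < b'" using b' t unfolding l'_def by (auto simp: min_def)
  have \<rho>l': "\<rho> t < \<rho> l'" using b'(2) l' by simp
  have rder: "(\<rho> has_real_derivative (W x / (1 * x * (u x)^2))) (at x)" if "r0 < x" "x < R" for x
    unfolding \<rho>_def W_def using rho_deriv[OF UO Z that] upos[of x] that r0 by simp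
  have Wd: "(W has_real_derivative (u x * z x / x)) (at x)" if "r0 < x" "x < R" for x
    unfolding W_def using wr_deriv[OF UO Z that] .
  have Wc: "isCont W x" if "r0 < x" "x < R" for x using DERIV_isCont[OF Wd[OF that]] .
  have rc: "isCont \<rho> x" if "r0 < x" "x < R" for x using DERIV_isCont[OF rder[OF that]] .
  have "\<exists>y. t < y \<and> y < R \<and> \<rho> t < \<rho> y"
  proof (rule ccontr)
    assume "\<not> (\<exists>y. t < y \<and> y < R \<and> \<rho> t < \<rho> y)"
    hence no: "\<rho> y \<le> \<rho> t" if "t < y" "y < R" for y using that by force
    have zneg: "z y < 0" if "t \<le> y" "y < R" for y
    proof (cases "y = t")
      case True thus ?thesis using zt by simp
    next
      case False
      hence "\<rho> y < 0" using no[of y] that \<rho>t by simp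
      moreover have "u y > 0" using upos that t r0 by simp
      ultimately show ?thesis by (simp add: \<rho>_def divide_less_0_iff)
    qed
    have Wneg': "u y * z y / y < 0" if "t < y" "y < R" for y
    proof -
      have "u y > 0" "z y < 0" "y > 0" using upos zneg that t r0 by auto
      thus ?thesis by (simp add: divide_neg_pos mult_pos_neg)
    qed
    have Wnn: "0 \<le> W x" if x: "t < x" "x < R" for x
    proof (rule lim_left_le[OF x(2)])
      show "(W \<longlongrightarrow> 0) (at_left R)" unfolding W_def by (rule W_lim_R[OF Z zc zR])
      fix s assume s: "x < s" "s < R"
      show "W s \<le> W x"
      proof (rule nonincr_open[where f = W and lo = t and hi = R])
        fix y assume y: "t < y" "y < R"
        show "(W has_real_derivative (u y * z y / y)) (at y)" using Wd y t by simp
        show "u y * z y / y \<le> 0" using Wneg'[OF y] by simp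
      qed (use s x in auto)
    qed
    have Wpos: "0 < W x" if x: "t < x" "x < R" for x
    proof -
      define x' where "x' = (x + R) / 2"
      have x': "x < x'" "x' < R" using x by (auto simp: x'_def)
      have "W x' < W x"
      proof (rule DERIV_neg_imp_decreasing_open[OF x'(1)])
        fix y assume y: "x < y" "y < x'"
        show "\<exists>l. (W has_real_derivative l) (at y) \<and> l < 0"
          using Wd[of y] Wneg'[of y] y x x' t by force
      next
        show "continuous_on {x..x'} W"
          by (rule continuous_at_imp_continuous_on, intro ballI)
             (use Wc x x' t in auto)
      qed
      thus ?thesis using Wnn[of x'] x x' by simp
    qed
    define y0 where "y0 = (t + R) / 2"
    have y0: "t < y0" "y0 < R" using t by (auto simp: y0_def)
    have "\<rho> t < \<rho> y0"
    proof (rule DERIV_pos_imp_increasing_open[OF y0(1)])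
      fix x assume x: "t < x" "x < y0"
      have "W x / (1 * x * (u x)^2) > 0" using Wpos[of x] upos[of x] x y0 t r0 by simp
      thus "\<exists>y. (\<rho> has_real_derivative y) (at x) \<and> 0 < y" using rder[of x] x y0 t by force
    next
      show "continuous_on {t..y0} \<rho>"
        by (rule continuous_at_imp_continuous_on, intro ballI)
           (use rc y0 t in auto)
    qed
    thus False using no[of y0] y0 by simp
  qed
  then obtain y where y: "t < y" "y < R" "\<rho> t < \<rho> y" by blast
  show False
  proof (rule core_min[of l' t y \<rho>])
    show "l' < t" "t < y" by (rule l'(2), rule y(1))
    show "continuous_on {l'..y} \<rho>"
      by (rule continuous_at_imp_continuous_on, intro ballI)
         (use rc l' y in auto)
    show "\<rho> t < \<rho> l'" by (rule \<rho>l')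
    show "\<rho> t < \<rho> y" by (rule y(3))
    show "\<rho> t < 0" by (rule \<rho>t)
    fix x assume x: "l' < x" "x < y"
    have xl: "r0 < x" "x < R" using x l' y by auto
    show "\<exists>d. (\<rho> has_real_derivative d) (at x)" using rder[OF xl] by blast
    assume neg: "\<rho> x < 0" and d0: "(\<rho> has_real_derivative 0) (at x)"
    obtain d where d: "d > 0" "\<forall>h>0. h < d \<longrightarrow> x + h < R \<longrightarrow> z (x + h) / u (x + h) < z x / u x"
      using rho_local[OF UO Z _ _ _ xl] neg d0 upos r0 unfolding \<rho>_def by force
    show "\<exists>d>0. \<forall>h>0. h < d \<longrightarrow> x + h < y \<longrightarrow> \<rho> (x + h) < \<rho> x"
      using d y unfolding \<rho>_def by force
  qed
qed

end

locale zsetting = useting +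
  fixes z z1 :: "real \<Rightarrow> real" and zi ze dzi dze :: real
  assumes zc1: "continuous_on {0..<r0} z" and zc2: "continuous_on {r0<..R} z"
    and zode: "solves_radial_ode \<kappa> r0 \<alpha> R lam 1 z z1"
    and zil: "(z \<longlongrightarrow> zi) (at_left r0)" and zer: "(z \<longlongrightarrow> ze) (at_right r0)"
    and dzil: "(z1 \<longlongrightarrow> dzi) (at_left r0)" and dzer: "(z1 \<longlongrightarrow> dze) (at_right r0)"
    and jump1: "dze - (1 + \<alpha> * \<kappa>) * dzi = - \<kappa> * u r0"
    and jump2: "ze - zi = - (b - a)"
    and z0: "z 0 = 0" and zR: "z R = 0"
begin

lemma ZI: "zph 0 r0 (1 + \<alpha> * \<kappa>) (lam + \<kappa>) z z1" by (rule ZI_of[OF zode])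
lemma ZO: "zph r0 R 1 lam z z1" by (rule ZO_of[OF zode])

lemma upos: "0 \<le> x \<Longrightarrow> x < R \<Longrightarrow> u x > 0" using u_pos by simp

lemma lim_W_in: "(wr (1 + \<alpha> * \<kappa>) u u1 z z1 \<longlongrightarrow>
    u r0 * ((1 + \<alpha> * \<kappa>) * r0 * dzi) - zi * ((1 + \<alpha> * \<kappa>) * r0 * a)) (at_left r0)"
  unfolding wr_def[abs_def] using u_lim_left[of 0 r0] r0 r0R
  by (intro tendsto_intros zil dzil ua) auto

lemma lim_W_out: "(wr 1 u u1 z z1 \<longlongrightarrow> u r0 * (1 * r0 * dze) - ze * (1 * r0 * b)) (at_right r0)"
  unfolding wr_def[abs_def] using u_lim_right[of r0 R] r0 r0R
  by (intro tendsto_intros zer dzer ub) auto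

lemma E1:
  assumes zi: "zi < 0" and zn: "\<And>t. 0 < t \<Longrightarrow> t < r0 \<Longrightarrow> z t \<le> 0"
  shows "u r0 * ((1 + \<alpha> * \<kappa>) * r0 * dzi) - zi * ((1 + \<alpha> * \<kappa>) * r0 * a) \<le> 0"
proof (rule ccontr)
  define W where "W = wr (1 + \<alpha> * \<kappa>) u u1 z z1"
  define Wl where "Wl = u r0 * ((1 + \<alpha> * \<kappa>) * r0 * dzi) - zi * ((1 + \<alpha> * \<kappa>) * r0 * a)"
  define \<rho> where "\<rho> = (\<lambda>r. z r / u r)"
  assume "\<not> ?thesis"
  hence Wl: "Wl > 0" by (simp add: Wl_def)
  have Wd: "(W has_real_derivative (u x * z x / x)) (at x)" if "0 < x" "x < r0" for x
    unfolding W_def using wr_deriv[OF UI ZI that] .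
  have Wge: "Wl \<le> W x" if x: "0 < x" "x < r0" for x
  proof (rule lim_left_le[OF x(2)])
    show "(W \<longlongrightarrow> Wl) (at_left r0)" unfolding W_def Wl_def by (rule lim_W_in)
    fix s assume s: "x < s" "s < r0"
    show "W s \<le> W x"
    proof (rule nonincr_open[where f = W and lo = 0 and hi = r0])
      fix y assume y: "0 < y" "y < r0"
      show "(W has_real_derivative (u y * z y / y)) (at y)" using Wd y by simp
      have "u y > 0" using upos y r0R by simp
      moreover have "z y \<le> 0" using zn y by simp
      ultimately show "u y * z y / y \<le> 0" using y by (simp add: divide_nonpos_pos mult_nonneg_nonpos)
    qed (use s x in auto)
  qed
  have rder: "(\<rho> has_real_derivative (W x / ((1 + \<alpha> * \<kappa>) * x * (u x)^2))) (at x)" if "0 < x" "x < r0" for x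
    unfolding \<rho>_def W_def using rho_deriv[OF UI ZI that] upos[of x] that r0R sig_pos by simp
  have rnn: "0 \<le> \<rho> x" if x: "0 < x" "x < r0" for x
  proof -
    have "\<rho> 0 \<le> \<rho> x"
    proof (rule DERIV_nonneg_imp_increasing_open[of 0 x \<rho>])
      show "0 \<le> x" using x by simp
      fix y assume y: "0 < y" "y < x"
      have "W y / ((1 + \<alpha> * \<kappa>) * y * (u y)^2) \<ge> 0"
        using Wge[of y] Wl y x upos[of y] r0R sig_pos by simp
      thus "\<exists>l. (\<rho> has_real_derivative l) (at y) \<and> 0 \<le> l" using rder[of y] y x by force
    next
      have "{0..x} \<subseteq> {0..<r0}" using x by auto
      hence "continuous_on {0..x} z" using continuous_on_subset[OF zc1] by blast
      thus "continuous_on {0..x} \<rho>" unfolding \<rho>_def using rho_cont[of 0 x] x r0R by simp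
    qed
    thus ?thesis using z0 by (simp add: \<rho>_def)
  qed
  have \<rho>lim: "(\<rho> \<longlongrightarrow> zi / u r0) (at_left r0)"
    unfolding \<rho>_def using tendsto_divide[OF zil u_lim_left[of 0 r0]] upos[of r0] r0 r0R by simp
  have "0 \<le> zi / u r0"
    by (rule lim_left_ge[of "r0/2" r0, OF _ \<rho>lim]) (use rnn r0 in auto)
  thus False using zi upos[of r0] r0 r0R by (simp add: divide_nonneg_pos zero_le_divide_iff)
qed

lemma W_out_nn:
  assumes zn: "\<And>t. r0 < t \<Longrightarrow> t < R \<Longrightarrow> z t \<le> 0"
  shows "0 \<le> u r0 * (1 * r0 * dze) - ze * (1 * r0 * b)"
proof -
  define W where "W = wr 1 u u1 z z1"
  have Wd: "(W has_real_derivative (u x * z x / x)) (at x)" if "r0 < x" "x < R" for x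
    unfolding W_def using wr_deriv[OF UO ZO that] .
  have Wnn: "0 \<le> W x" if x: "r0 < x" "x < R" for x
  proof (rule lim_left_le[OF x(2)])
    show "(W \<longlongrightarrow> 0) (at_left R)" unfolding W_def by (rule W_lim_R[OF ZO zc2 zR])
    fix s assume s: "x < s" "s < R"
    show "W s \<le> W x"
    proof (rule nonincr_open[where f = W and lo = r0 and hi = R])
      fix y assume y: "r0 < y" "y < R"
      show "(W has_real_derivative (u y * z y / y)) (at y)" using Wd y by simp
      have "u y > 0" using upos y r0 by simp
      moreover have "z y \<le> 0" using zn y by simp
      ultimately show "u y * z y / y \<le> 0" using y r0 by (simp add: divide_nonpos_pos mult_nonneg_nonpos)
    qed (use s x in auto)
  qed
  show ?thesis
    by (rule lim_right_ge[OF r0R, where f = W]) (use lim_W_out Wnn in \<open>auto simp: W_def\<close>)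
qed

lemma E2:
  assumes ze: "ze \<ge> 0" and zp: "\<And>t. r0 < t \<Longrightarrow> t < R \<Longrightarrow> z t \<ge> 0"
  shows "- (R * u r0 * ze / r0) \<le> (u r0 * (1 * r0 * dze) - ze * (1 * r0 * b)) - u r0 * ze"
proof -
  define W where "W = wr 1 u u1 z z1"
  define \<rho> where "\<rho> = (\<lambda>r. z r / u r)"
  define u0 where "u0 = u r0"
  have u0p: "u0 > 0" using upos[of r0] r0 r0R by (simp add: u0_def)
  have Wd: "(W has_real_derivative (u x * z x / x)) (at x)" if "r0 < x" "x < R" for x
    unfolding W_def using wr_deriv[OF UO ZO that] .
  have Wnp: "W x \<le> 0" if x: "r0 < x" "x < R" for x
  proof (rule lim_left_ge[OF x(2)])
    show "(W \<longlongrightarrow> 0) (at_left R)" unfolding W_def by (rule W_lim_R[OF ZO zc2 zR])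
    fix s assume s: "x < s" "s < R"
    show "W x \<le> W s"
    proof (rule nondecr_open[where f = W and lo = r0 and hi = R])
      fix y assume y: "r0 < y" "y < R"
      show "(W has_real_derivative (u y * z y / y)) (at y)" using Wd y by simp
      have "u y > 0" using upos y r0 by simp
      moreover have "z y \<ge> 0" using zp y by simp
      ultimately show "0 \<le> u y * z y / y" using y r0 by simp
    qed (use s x in auto)
  qed
  have rder: "(\<rho> has_real_derivative (W x / (1 * x * (u x)^2))) (at x)" if "r0 < x" "x < R" for x
    unfolding \<rho>_def W_def using rho_deriv[OF UO ZO that] upos[of x] that r0 by simp
  have \<rho>lim: "(\<rho> \<longlongrightarrow> ze / u0) (at_right r0)"
    unfolding \<rho>_def u0_def using tendsto_divide[OF zer u_lim_right[of r0 R]] u0p r0 r0R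
    by (simp add: u0_def)
  have rle: "\<rho> x \<le> ze / u0" if x: "r0 < x" "x < R" for x
  proof (rule lim_right_ge[OF x(1) \<rho>lim])
    fix s assume s: "r0 < s" "s < x"
    show "\<rho> x \<le> \<rho> s"
    proof (rule nonincr_open[where f = \<rho> and lo = r0 and hi = R])
      fix y assume y: "r0 < y" "y < R"
      show "(\<rho> has_real_derivative (W y / (1 * y * (u y)^2))) (at y)" using rder y by simp
      have "0 < 1 * y * (u y)^2" using upos[of y] y r0 by simp
      thus "W y / (1 * y * (u y)^2) \<le> 0" using Wnp[OF y] by (simp add: divide_nonpos_pos)
    qed (use s x in auto)
  qed
  have zle: "z x \<le> ze" if x: "r0 < x" "x < R" for x
  proof -
    have ux: "u x > 0" "u x \<le> u0" using upos[of x] u_antimono[of r0 x] x r0 by (auto simp: u0_def)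
    have "z x = \<rho> x * u x" using ux by (simp add: \<rho>_def)
    also have "\<dots> \<le> ze / u0 * u x" using rle[OF x] ux by (intro mult_right_mono) auto
    also have "\<dots> \<le> ze / u0 * u0" using ux ze u0p by (intro mult_left_mono) auto
    also have "\<dots> = ze" using u0p by simp
    finally show ?thesis .
  qed
  define H where "H = (\<lambda>x. W x - x * u0 * ze / r0)"
  have Hd: "(H has_real_derivative (u x * z x / x - u0 * ze / r0)) (at x)" if "r0 < x" "x < R" for x
  proof -
    have "((\<lambda>x. x * u0 * ze / r0) has_real_derivative (u0 * ze / r0)) (at x)"
      using r0 by (auto intro!: derivative_eq_intros)
    from DERIV_diff[OF Wd[OF that] this] show ?thesis by (simp add: H_def)
  qed
  have Hnp: "u x * z x / x - u0 * ze / r0 \<le> 0" if x: "r0 < x" "x < R" for x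
  proof -
    have ux: "0 \<le> u x" "u x \<le> u0" using upos[of x] u_antimono[of r0 x] x r0 by (auto simp: u0_def)
    have zx: "0 \<le> z x" "z x \<le> ze" using zp[OF x] zle[OF x] by auto
    have "u x * z x \<le> u0 * ze" using ux zx by (intro mult_mono) auto
    hence "u x * z x / x \<le> u0 * ze / x" using x r0 by (simp add: divide_right_mono)
    also have "\<dots> \<le> u0 * ze / r0" using x r0 u0p ze by (intro divide_left_mono) auto
    finally show ?thesis by simp
  qed
  have Hanti: "H y \<le> H x" if "r0 < x" "x \<le> y" "y < R" for x y
    by (rule nonincr_open[where f = H and lo = r0 and hi = R]) (use Hd Hnp that in auto)
  define m where "m = (r0 + R) / 2"
  have m: "r0 < m" "m < R" using r0R by (auto simp: m_def)
  have HlimL: "(H \<longlongrightarrow> (u0 * (1 * r0 * dze) - ze * (1 * r0 * b)) - r0 * u0 * ze / r0) (at_right r0)"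
    unfolding H_def W_def u0_def using r0 by (intro tendsto_intros lim_W_out) auto
  have HlimR: "(H \<longlongrightarrow> 0 - R * u0 * ze / r0) (at_left R)"
    unfolding H_def W_def using r0 by (intro tendsto_intros W_lim_R[OF ZO zc2 zR]) auto
  have "H m \<le> (u0 * (1 * r0 * dze) - ze * (1 * r0 * b)) - r0 * u0 * ze / r0"
    by (rule lim_right_ge[OF m(1) HlimL]) (use Hanti m in auto)
  moreover have "0 - R * u0 * ze / r0 \<le> H m"
    by (rule lim_left_le[OF m(2) HlimR]) (use Hanti m in auto)
  ultimately show ?thesis using r0 by (simp add: u0_def)
qed

end

context zsetting
begin

lemma z_nonneg:
  assumes aB: "\<alpha> \<le> r0 / (2 * (r0 * Vb^2 + Vb * (R - r0) / r0))"
  shows "\<forall>t\<in>{0<..<R} - {r0}. 0 \<le> z t"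
proof -
  define u0 where "u0 = u r0"
  define P where "P = r0 * Vb^2 + Vb * (R - r0) / r0"
  define K where "K = \<kappa> * u0^2"
  have u0p: "u0 > 0" using upos[of r0] r0 r0R by (simp add: u0_def)
  have Kp: "K > 0" using u0p k0 by (simp add: K_def)
  have Vp: "Vb > 0" by (rule Vb_pos)
  have Pp: "P > 0" using Vp r0 r0R by (simp add: P_def add_pos_pos)
  have aP: "\<alpha> * P \<le> r0 / 2"
  proof -
    have "\<alpha> \<le> r0 / (2 * P)" using aB by (simp add: P_def)
    hence "\<alpha> * (2 * P) \<le> r0" using Pp by (simp add: le_divide_eq)
    thus ?thesis by simp
  qed
  have aV: "\<alpha> * Vb^2 \<le> 1/2"
  proof -
    have "r0 * Vb^2 \<le> P" using Vp r0 r0R by (simp add: P_def)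
    hence "\<alpha> * (r0 * Vb^2) \<le> \<alpha> * P" using al by (simp add: mult_left_mono)
    hence "r0 * (\<alpha> * Vb^2) \<le> r0 * (1/2)" using aP by (simp add: algebra_simps)
    thus ?thesis using r0 by simp
  qed
  have bV: "- b \<le> Vb * u0" using b_bound by (simp add: u0_def)
  have nb: "0 \<le> - b" using b_nonpos by simp
  have na: "0 \<le> - a" using a_nonpos by simp
  have ab: "- a \<le> - b" using b_le_a by simp
  have Jeq: "ze - zi = \<alpha> * \<kappa> * (- a)" using jump2 b_eq by (simp add: algebra_simps)
  have akn: "0 \<le> \<alpha> * \<kappa>" using al k0 by simp
  have Jnn: "0 \<le> ze - zi" using Jeq mult_nonneg_nonneg[OF akn na] by simp
  have JV: "ze - zi \<le> \<alpha> * \<kappa> * (Vb * u0)"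
  proof -
    have "\<alpha> * \<kappa> * (- a) \<le> \<alpha> * \<kappa> * (Vb * u0)" using ab bV akn by (intro mult_left_mono) auto
    thus ?thesis using Jeq by simp
  qed
  have Jb: "(ze - zi) * (- b) \<le> (\<alpha> * Vb^2) * K"
  proof -
    have "(ze - zi) * (- b) \<le> (\<alpha> * \<kappa> * (Vb * u0)) * (Vb * u0)"
      using JV bV Jnn nb by (intro mult_mono) auto
    thus ?thesis by (simp add: K_def power2_eq_square algebra_simps)
  qed
  have in_nn: "0 \<le> z t" if "zi \<ge> 0" "0 < t" "t < r0" for t
    using sign_in[OF ZI zc1 z0 zil] that by simp
  have out_nn: "0 \<le> z t" if "ze \<ge> 0" "r0 < t" "t < R" for t
    using sign_out[OF ZO zc2 zR zer] that by simp
  have in_np: "z t \<le> 0" if "zi \<le> 0" "0 < t" "t < r0" for t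
    using sign_in[OF zph_neg[OF ZI] continuous_on_minus[OF zc1] _ tendsto_minus[OF zil]] z0 that by simp
  have out_np: "z t \<le> 0" if "ze \<le> 0" "r0 < t" "t < R" for t
    using sign_out[OF zph_neg[OF ZO] continuous_on_minus[OF zc2] _ tendsto_minus[OF zer]] zR that by simp
  have zi0: "zi \<ge> 0"
  proof (rule ccontr)
    assume "\<not> zi \<ge> 0"
    hence zin: "zi < 0" by simp
    define X where "X = u0 * (1 + \<alpha> * \<kappa>) * dzi"
    have "u r0 * ((1 + \<alpha> * \<kappa>) * r0 * dzi) - zi * ((1 + \<alpha> * \<kappa>) * r0 * a) \<le> 0"
      using E1[OF zin] in_np zin by simp
    hence "r0 * (X - zi * b) \<le> 0" using b_eq by (simp add: X_def u0_def algebra_simps)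
    hence e1: "X \<le> zi * b" using r0 by (simp add: mult_le_0_iff)
    have dze_eq: "dze = (1 + \<alpha> * \<kappa>) * dzi - \<kappa> * u0" using jump1 by (simp add: u0_def algebra_simps)
    have dz: "u0 * dze = X - K" unfolding dze_eq X_def K_def by (simp add: algebra_simps power2_eq_square)
    have zib: "zi * b - ze * b = (ze - zi) * (- b)" by (simp add: algebra_simps)
    show False
    proof (cases "ze < 0")
      case True
      have "0 \<le> u r0 * (1 * r0 * dze) - ze * (1 * r0 * b)"
        using W_out_nn out_np True by simp
      hence "r0 * (ze * b) \<le> r0 * (u0 * dze)" by (simp add: u0_def algebra_simps)
      hence "ze * b \<le> u0 * dze" using r0 by simp
      hence "K \<le> (ze - zi) * (- b)" using dz e1 zib by linarith
      also have "\<dots> \<le> (\<alpha> * Vb^2) * K" by (rule Jb)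
      also have "\<dots> \<le> (1/2) * K" using aV Kp by (intro mult_right_mono) auto
      finally show False using Kp by simp
    next
      case False
      hence ze0: "ze \<ge> 0" by simp
      have "- (R * u r0 * ze / r0) \<le> (u r0 * (1 * r0 * dze) - ze * (1 * r0 * b)) - u r0 * ze"
        using E2[OF ze0] out_nn ze0 by simp
      hence e2: "- (R * u0 * ze / r0) \<le> r0 * (u0 * dze) - r0 * (ze * b) - u0 * ze"
        by (simp add: u0_def algebra_simps)
      have "R * u0 * ze / r0 - u0 * ze = u0 * ze * ((R - r0) / r0)" using r0 by (simp add: field_simps)
      moreover have "r0 * (u0 * dze) = r0 * X - r0 * K" using arg_cong[OF dz, of "\<lambda>v. r0 * v"] by (simp add: right_diff_distrib)
      moreover have "r0 * X \<le> r0 * (zi * b)" using e1 r0 by (simp add: mult_left_mono)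
      moreover have "r0 * (zi * b) - r0 * (ze * b) = r0 * ((ze - zi) * (- b))" by (simp add: algebra_simps)
      ultimately have "r0 * K \<le> r0 * ((ze - zi) * (- b)) + u0 * ze * ((R - r0) / r0)"
        using e2 by linarith
      also have "\<dots> \<le> r0 * ((\<alpha> * Vb^2) * K) + u0 * (\<alpha> * \<kappa> * (Vb * u0)) * ((R - r0) / r0)"
      proof -
        have "r0 * ((ze - zi) * (- b)) \<le> r0 * ((\<alpha> * Vb^2) * K)" using Jb r0 by (intro mult_left_mono) auto
        moreover have "u0 * ze * ((R - r0) / r0) \<le> u0 * (\<alpha> * \<kappa> * (Vb * u0)) * ((R - r0) / r0)"
        proof -
          have "ze \<le> \<alpha> * \<kappa> * (Vb * u0)" using JV zin by simp
          thus ?thesis using u0p r0 r0R by (intro mult_right_mono mult_left_mono) auto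
        qed
        ultimately show ?thesis by simp
      qed
      also have "\<dots> = (\<alpha> * P) * K" by (simp add: P_def K_def power2_eq_square algebra_simps)
      also have "\<dots> \<le> (r0 / 2) * K" using aP Kp by (intro mult_right_mono) auto
      finally show False using Kp r0 by simp
    qed
  qed
  have ze0: "ze \<ge> 0" using zi0 Jnn by simp
  show ?thesis
  proof
    fix t assume "t \<in> {0<..<R} - {r0}"
    hence "0 < t \<and> t < r0 \<or> r0 < t \<and> t < R" by auto
    thus "0 \<le> z t" using in_nn[OF zi0] out_nn[OF ze0] by auto
  qed
qed

end

definition vbar :: "real \<Rightarrow> real \<Rightarrow> real \<Rightarrow> real" where
  "vbar \<kappa> r0 R = max (\<kappa> * R^2 / r0) (2 * R / (r0 * (R - r0)))"

definition abar :: "real \<Rightarrow> real \<Rightarrow> real \<Rightarrow> real" where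
  "abar \<kappa> r0 R = r0 / (2 * (r0 * (vbar \<kappa> r0 R)^2 + vbar \<kappa> r0 R * (R - r0) / r0))"

lemma (in zsetting) z_nonneg2:
  assumes "\<alpha> \<le> abar \<kappa> r0 R"
  shows "\<forall>t\<in>{0<..<R} - {r0}. 0 \<le> z t"
  using z_nonneg assms unfolding abar_def vbar_def Vb_def by simp

lemma abar_pos:
  assumes "0 < \<kappa>" "0 < r0" "r0 < R"
  shows "0 < abar \<kappa> r0 R"
proof -
  have "vbar \<kappa> r0 R > 0" unfolding vbar_def using assms by (simp add: less_max_iff_disj)
  hence "r0 * (vbar \<kappa> r0 R)^2 + vbar \<kappa> r0 R * (R - r0) / r0 > 0" using assms
    by (intro add_pos_pos) auto
  thus ?thesis unfolding abar_def using assms by simp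
qed

theorem lemma6p5:
  fixes R \<kappa> m0 r0 :: real
  assumes "0 < m0" and "m0 < \<kappa>" and "0 < r0" and "r0 < R"
    and "\<kappa> * (pi * r0\<^sup>2) = m0 * (pi * R\<^sup>2)"
  shows "\<exists>\<alpha>bar > 0. \<forall>\<alpha> \<in> {0..\<alpha>bar}. \<forall>lam u z.
           principal_eigenpair \<kappa> r0 \<alpha> R lam u \<longrightarrow> z_problem \<kappa> r0 \<alpha> R lam u 1 z \<longrightarrow>
           (\<forall>r \<in> {0<..<R} - {r0}. 0 \<le> z r)"
proof (intro exI[of _ "abar \<kappa> r0 R"] conjI ballI allI impI)
  have k0: "0 < \<kappa>" using assms(1,2) by simp
  show "0 < abar \<kappa> r0 R" using abar_pos k0 assms(3,4) by simp
  fix \<alpha> lam u z r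
  assume alI: "\<alpha> \<in> {0..abar \<kappa> r0 R}" and PE: "principal_eigenpair \<kappa> r0 \<alpha> R lam u"
    and ZP: "z_problem \<kappa> r0 \<alpha> R lam u 1 z" and r: "r \<in> {0<..<R} - {r0}"
  from PE have RE: "radial_eigenfunction \<kappa> r0 \<alpha> R lam u" and unn: "\<forall>r\<in>{0..R}. 0 \<le> u r"
    unfolding principal_eigenpair_def by auto
  from RE obtain u1 a b where ucont: "continuous_on {0..R} u"
    and uode: "solves_radial_ode \<kappa> r0 \<alpha> R lam 0 u u1"
    and ua: "(u1 \<longlongrightarrow> a) (at_left r0)" and ub: "(u1 \<longlongrightarrow> b) (at_right r0)"
    and bab: "b - (1 + \<alpha> * \<kappa>) * a = 0"
    and uR: "u R = 0" and unz: "\<exists>r\<in>{0..R}. u r \<noteq> 0"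
    unfolding radial_eigenfunction_def by blast
  from ZP obtain z1 u2 zi ze dzi dze dui due where
    zc1: "continuous_on {0..<r0} z" and zc2: "continuous_on {r0<..R} z"
    and zode: "solves_radial_ode \<kappa> r0 \<alpha> R lam 1 z z1"
    and u2d: "\<forall>r \<in> {0<..<r0} \<union> {r0<..<R}. (u has_real_derivative u2 r) (at r)"
    and zil: "(z \<longlongrightarrow> zi) (at_left r0)" and zer: "(z \<longlongrightarrow> ze) (at_right r0)"
    and dzil: "(z1 \<longlongrightarrow> dzi) (at_left r0)" and dzer: "(z1 \<longlongrightarrow> dze) (at_right r0)"
    and duil: "(u2 \<longlongrightarrow> dui) (at_left r0)" and duer: "(u2 \<longlongrightarrow> due) (at_right r0)"
    and j1: "1 * dze - (1 + \<alpha> * \<kappa>) * dzi = - \<kappa> * u r0"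
    and j2: "ze - zi = - (due - dui)"
    and z0: "z 0 = 0" and zR: "z R = 0"
    unfolding z_problem_def by blast
  have u12: "u2 x = u1 x" if "x \<in> {0<..<r0} \<union> {r0<..<R}" for x
  proof -
    have "(u has_real_derivative u1 x) (at x)" using uode that unfolding solves_radial_ode_def by blast
    thus ?thesis using DERIV_unique u2d that by blast
  qed
  have "(u1 \<longlongrightarrow> dui) (at_left r0)"
  proof (rule tendsto_cong[THEN iffD1, OF _ duil])
    show "\<forall>\<^sub>F x in at_left r0. u2 x = u1 x"
      unfolding eventually_at_left_field using assms(3) u12 by (intro exI[of _ 0]) auto
  qed
  hence dui: "dui = a" using tendsto_unique[OF _ _ ua] by simp
  have "(u1 \<longlongrightarrow> due) (at_right r0)"
  proof (rule tendsto_cong[THEN iffD1, OF _ duer])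
    show "\<forall>\<^sub>F x in at_right r0. u2 x = u1 x"
      unfolding eventually_at_right_field using assms(4) u12 by (intro exI[of _ R]) auto
  qed
  hence due: "due = b" using tendsto_unique[OF _ _ ub] by simp
  interpret zsetting \<kappa> r0 R \<alpha> lam u u1 a b z z1 zi ze dzi dze
  proof
    show "0 < \<kappa>" "0 < r0" "r0 < R" using k0 assms(3,4) by auto
    show "0 \<le> \<alpha>" using alI by simp
  qed (use ucont uode ua ub bab uR unz unn zc1 zc2 zode zil zer dzil dzer j1 j2 dui due z0 zR in auto)
  have "\<alpha> \<le> abar \<kappa> r0 R" using alI by simp
  from z_nonneg2[OF this] r show "0 \<le> z r" by blast
qed

end
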